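(* Let $v:\mathbb{C}\rightarrow\mathbb{R}$ be a solution of $v_{z\bar z}+\frac12\sinh(2v)=0$, and let $\phi_t:(\mathbb{C},e^{2v}|dz|^2)\rightarrow\mathbb{S}^3$, $t\in\mathbb{R}$, be a $1$-parameter family of isometric minimal immersions with Hopf differentials $\Theta_{\phi_t}=\frac{i}{2}e^{it}dz\otimes dz$. Then for each $t$ the map \[ \Phi_t(z)=\bigl(\nu^+_{\phi_t}(z),\,2\,\mathrm{Im}(ze^{it/2})\bigr) \] is an isometric minimal immersion $(\mathbb{C},4\cosh^2v\,|dz|^2)\rightarrow\mathbb{S}^2_+\times\mathbb{R}$ with Hopf differential $e^{it}dz\otimes dz$; i.e., $\{\Phi_t\}$ is the $1$-parameter family of isometric minimal immersions of $(\mathbb{C},4\cosh^2v|dz|^2)$ into $\mathbb{S}^2\times\mathbb{R}$ with Hopf differentials $e^{it}dz\otimes dz$.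
   Context: For a conformal minimal immersion $\phi:\Sigma\to\mathbb{S}^3\subset\mathbb{R}^4$ with conformal parameter $z=x+iy$, $N$ is the unit normal in $\mathbb{S}^3$ with $\{\phi_x,\phi_y,\phi,N\}$ positively oriented in $\mathbb{R}^4$; its Hopf differential is $\Theta_\phi=\langle\phi_z,N_z\rangle dz\otimes dz$ ($\langle\cdot,\cdot\rangle$ complex-bilinear, $\partial_z=\frac12(\partial_x-i\partial_y)$). $\Lambda^2\mathbb{R}^4$ has the inner product $\langle v\wedge w,v'\wedge w'\rangle=\langle v,v'\rangle\langle w,w'\rangle-\langle v,w'\rangle\langle w,v'\rangle$; $\Lambda^2_+\mathbb{R}^4$ is the $+1$ eigenspace of the Hodge star, $\mathbb{S}^2_+$ its unit sphere (an isometric copy of $\mathbb{S}^2$), and $\nu^+_\phi(p)=\frac1{\sqrt2}(e_1\wedge e_2+\phi(p)\wedge N_p)$ for an oriented orthonormal basis $\{e_1,e_2\}$ of $d\phi(T_p\Sigma)$. For a conformal immersion $\Phi=(\Phi_1,\Phi_2)$ into $\mathbb{S}^2\times\mathbb{R}$, its Hopf differential is $\langle(\Phi_1)_z,(\Phi_1)_z\rangle dz\otimes dz$. *)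

theory Defs
  imports "HOL-Analysis.Analysis"
begin

definition dx :: "(complex \<Rightarrow> 'a::real_normed_vector) \<Rightarrow> complex \<Rightarrow> 'a" where
  "dx f z = frechet_derivative f (at z) 1"

definition dy :: "(complex \<Rightarrow> 'a::real_normed_vector) \<Rightarrow> complex \<Rightarrow> 'a" where
  "dy f z = frechet_derivative f (at z) \<i>"

text \<open>Euclidean Laplacian f_xx + f_yy (note f_{z zbar} = lap f / 4).\<close>
definition lap :: "(complex \<Rightarrow> 'a::real_normed_vector) \<Rightarrow> complex \<Rightarrow> 'a" where
  "lap f z = dx (dx f) z + dy (dy f) z"

inductive_set partials :: "(complex \<Rightarrow> 'a::real_normed_vector) \<Rightarrow> (complex \<Rightarrow> 'a) set"
  for f where
  base: "f \<in> partials f"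
| stepx: "g \<in> partials f \<Longrightarrow> dx g \<in> partials f"
| stepy: "g \<in> partials f \<Longrightarrow> dy g \<in> partials f"

definition smooth :: "(complex \<Rightarrow> 'a::real_normed_vector) \<Rightarrow> bool" where
  "smooth f \<longleftrightarrow> (\<forall>g\<in>partials f. \<forall>z. g differentiable (at z))"

text \<open>Complexified derivative d/dz = (d/dx - i d/dy)/2 of a real-vector-valued map,
  represented as (real part, imaginary part).\<close>
definition dz :: "(complex \<Rightarrow> 'a::real_normed_vector) \<Rightarrow> complex \<Rightarrow> 'a \<times> 'a" where
  "dz f z = (scaleR (1/2) (dx f z), scaleR (-1/2) (dy f z))"

text \<open>Complex-bilinear extension of the real inner product: <a+ib, c+id>.\<close>
definition cbil :: "'a::real_inner \<times> 'a \<Rightarrow> 'a \<times> 'a \<Rightarrow> complex" where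
  "cbil p q = Complex (fst p \<bullet> fst q - snd p \<bullet> snd q) (fst p \<bullet> snd q + snd p \<bullet> fst q)"

text \<open>f is an isometric immersion of (C, lam |dz|^2).\<close>
definition isometric_immersion :: "(complex \<Rightarrow> 'a::real_inner) \<Rightarrow> (complex \<Rightarrow> real) \<Rightarrow> bool" where
  "isometric_immersion f lam \<longleftrightarrow> smooth f \<and>
     (\<forall>z. lam z > 0 \<and> dx f z \<bullet> dx f z = lam z \<and> dy f z \<bullet> dy f z = lam z \<and> dx f z \<bullet> dy f z = 0)"

text \<open>Isometric minimal immersion into a submanifold M of a Euclidean space whose tangent space
  at p is Tan p: f maps into M and its mean curvature vector (the component of the Laplacian
  tangent to M and normal to the surface) vanishes.\<close>
definition isometric_minimal_immersion ::
  "'a::real_inner set \<Rightarrow> ('a \<Rightarrow> 'a set) \<Rightarrow> (complex \<Rightarrow> 'a) \<Rightarrow> (complex \<Rightarrow> real) \<Rightarrow> bool" where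
  "isometric_minimal_immersion M Tan f lam \<longleftrightarrow> isometric_immersion f lam \<and> (\<forall>z. f z \<in> M) \<and>
     (\<forall>z u. u \<in> Tan (f z) \<and> u \<bullet> dx f z = 0 \<and> u \<bullet> dy f z = 0 \<longrightarrow> lap f z \<bullet> u = 0)"

definition S3 :: "(real^4) set" where "S3 = {p. norm p = 1}"

definition TanS3 :: "real^4 \<Rightarrow> (real^4) set" where "TanS3 p = {u. u \<bullet> p = 0}"

definition normal_S3 :: "(complex \<Rightarrow> real^4) \<Rightarrow> complex \<Rightarrow> real^4" where
  "normal_S3 \<phi> z = (THE n. norm n = 1 \<and> n \<bullet> dx \<phi> z = 0 \<and> n \<bullet> dy \<phi> z = 0 \<and> n \<bullet> \<phi> z = 0 \<and>
       det (vector [dx \<phi> z, dy \<phi> z, \<phi> z, n] :: real^4^4) > 0)"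

definition hopf_S3 :: "(complex \<Rightarrow> real^4) \<Rightarrow> complex \<Rightarrow> complex" where
  "hopf_S3 \<phi> z = cbil (dz \<phi> z) (dz (normal_S3 \<phi>) z)"

section \<open>Lambda^2 R^4, represented in the orthonormal basis
  e12, e13, e14, e23, e24, e34 (components 1..6)\<close>

definition wedge :: "real^4 \<Rightarrow> real^4 \<Rightarrow> real^6" where
  "wedge a b = vector [a$1*b$2 - a$2*b$1, a$1*b$3 - a$3*b$1, a$1*b$4 - a$4*b$1,
                       a$2*b$3 - a$3*b$2, a$2*b$4 - a$4*b$2, a$3*b$4 - a$4*b$3]"

text \<open>Hodge star for the standard orientation e1 e2 e3 e4.\<close>
definition hodge :: "real^6 \<Rightarrow> real^6" where
  "hodge w = vector [w$6, - w$5, w$4, w$3, - w$2, w$1]"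

definition Lambda2plus :: "(real^6) set" where "Lambda2plus = {w. hodge w = w}"

definition S2plus :: "(real^6) set" where "S2plus = {w. w \<in> Lambda2plus \<and> norm w = 1}"

definition nu_plus :: "(complex \<Rightarrow> real^4) \<Rightarrow> complex \<Rightarrow> real^6" where
  "nu_plus \<phi> z = scaleR (1 / sqrt 2)
     (wedge (scaleR (1 / norm (dx \<phi> z)) (dx \<phi> z)) (scaleR (1 / norm (dy \<phi> z)) (dy \<phi> z))
      + wedge (\<phi> z) (normal_S3 \<phi> z))"

definition TanS2R :: "(real^6) \<times> real \<Rightarrow> ((real^6) \<times> real) set" where
  "TanS2R p = {u. fst u \<in> Lambda2plus \<and> fst u \<bullet> fst p = 0}"

definition hopf_S2R :: "(complex \<Rightarrow> (real^6) \<times> real) \<Rightarrow> complex \<Rightarrow> complex" where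
  "hopf_S2R \<Phi> z = cbil (dz (\<lambda>w. fst (\<Phi> w)) z) (dz (\<lambda>w. fst (\<Phi> w)) z)"

end

theory Submission
  imports Defs
begin

lemma vector4 [simp]:
  "(vector [a,b,c,d] :: ('x::zero)^4) $ 1 = a"
  "(vector [a,b,c,d] :: ('x::zero)^4) $ 2 = b"
  "(vector [a,b,c,d] :: ('x::zero)^4) $ 3 = c"
  "(vector [a,b,c,d] :: ('x::zero)^4) $ 4 = d"
  unfolding vector_def by simp_all

lemma exhaust_6: fixes x :: 6 shows "x = 1 \<or> x = 2 \<or> x = 3 \<or> x = 4 \<or> x = 5 \<or> x = 6"
proof (induct x)
  case (of_int z)
  then have "z = 0 \<or> z = 1 \<or> z = 2 \<or> z = 3 \<or> z = 4 \<or> z = 5" by fastforce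
  then show ?case by auto
qed

lemma forall_6: "(\<forall>i::6. P i) \<longleftrightarrow> P 1 \<and> P 2 \<and> P 3 \<and> P 4 \<and> P 5 \<and> P 6"
  by (metis exhaust_6)

lemma UNIV_6: "UNIV = {1, 2, 3, 4, 5, 6::6}"
  using exhaust_6 by auto

lemma sum_6: "sum f (UNIV::6 set) = f 1 + f 2 + f 3 + f 4 + f 5 + f 6"
  unfolding UNIV_6 by (simp add: ac_simps)

lemma vector6 [simp]:
  "(vector [a,b,c,d,e,f] :: ('x::zero)^6) $ 1 = a"
  "(vector [a,b,c,d,e,f] :: ('x::zero)^6) $ 2 = b"
  "(vector [a,b,c,d,e,f] :: ('x::zero)^6) $ 3 = c"
  "(vector [a,b,c,d,e,f] :: ('x::zero)^6) $ 4 = d"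
  "(vector [a,b,c,d,e,f] :: ('x::zero)^6) $ 5 = e"
  "(vector [a,b,c,d,e,f] :: ('x::zero)^6) $ 6 = f"
  unfolding vector_def by simp_all

lemma inner4: "(x::real^4) \<bullet> y = x$1*y$1 + x$2*y$2 + x$3*y$3 + x$4*y$4"
  by (simp add: inner_vec_def sum_4)

lemma inner6: "(x::real^6) \<bullet> y = x$1*y$1 + x$2*y$2 + x$3*y$3 + x$4*y$4 + x$5*y$5 + x$6*y$6"
  by (simp add: inner_vec_def sum_6)

lemma wedge_comp [simp]:
  "wedge a b $ 1 = a$1*b$2 - a$2*b$1" "wedge a b $ 2 = a$1*b$3 - a$3*b$1"
  "wedge a b $ 3 = a$1*b$4 - a$4*b$1" "wedge a b $ 4 = a$2*b$3 - a$3*b$2"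
  "wedge a b $ 5 = a$2*b$4 - a$4*b$2" "wedge a b $ 6 = a$3*b$4 - a$4*b$3"
  by (simp_all add: wedge_def)

lemma hodge_comp [simp]:
  "hodge w $ 1 = w$6" "hodge w $ 2 = - w$5" "hodge w $ 3 = w$4"
  "hodge w $ 4 = w$3" "hodge w $ 5 = - w$2" "hodge w $ 6 = w$1"
  by (simp_all add: hodge_def)

lemma vec6_eq: "(x::real^6) = y \<longleftrightarrow> x$1 = y$1 \<and> x$2 = y$2 \<and> x$3 = y$3 \<and> x$4 = y$4 \<and> x$5 = y$5 \<and> x$6 = y$6"
  by (simp add: vec_eq_iff forall_6)

lemma vec4_eq: "(x::real^4) = y \<longleftrightarrow> x$1 = y$1 \<and> x$2 = y$2 \<and> x$3 = y$3 \<and> x$4 = y$4"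
  by (simp add: vec_eq_iff forall_4)

lemma inner_wedge: "wedge a b \<bullet> wedge c d = (a \<bullet> c) * (b \<bullet> d) - (a \<bullet> d) * (b \<bullet> c)"
  unfolding inner6 inner4 by (simp; algebra)

lemma wedge_add_left: "wedge (a + b) c = wedge a c + wedge b c"
  and wedge_add_right: "wedge c (a + b) = wedge c a + wedge c b"
  and wedge_diff_left: "wedge (a - b) c = wedge a c - wedge b c"
  and wedge_diff_right: "wedge c (a - b) = wedge c a - wedge c b"
  and wedge_scaleR_left: "wedge (r *\<^sub>R a) c = r *\<^sub>R wedge a c"
  and wedge_scaleR_right: "wedge c (r *\<^sub>R a) = r *\<^sub>R wedge c a"
  and wedge_minus_left: "wedge (- a) c = - wedge a c"
  and wedge_minus_right: "wedge c (- a) = - wedge c a"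
  and wedge_anti: "wedge b a = - wedge a b"
  and wedge_self: "wedge a a = 0"
  by (simp_all add: vec6_eq algebra_simps)

lemma bilinear_wedge: "bilinear wedge"
  unfolding bilinear_def by (auto intro!: linearI simp: wedge_add_left wedge_add_right wedge_scaleR_left wedge_scaleR_right)

lemma bounded_bilinear_wedge: "bounded_bilinear wedge"
  by (rule bilinear_conv_bounded_bilinear[THEN iffD1, OF bilinear_wedge])

lemma hodge_hodge: "hodge (hodge w) = w" by (simp add: vec6_eq)
lemma inner_hodge: "hodge u \<bullet> hodge w = u \<bullet> w" unfolding inner6 by (simp; algebra)
lemma hodge_add: "hodge (u + w) = hodge u + hodge w" and hodge_scaleR: "hodge (r *\<^sub>R u) = r *\<^sub>R hodge u"
  by (simp_all add: vec6_eq)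

lemma UNIV_4': "(UNIV::4 set) = {1,2,3,4}"
  using exhaust_4 by auto

lemma det4: "det (A::'a::comm_ring_1^4^4) =
 A$1$1*A$2$2*A$3$3*A$4$4 - A$1$1*A$2$2*A$3$4*A$4$3 - A$1$1*A$2$3*A$3$2*A$4$4 + A$1$1*A$2$3*A$3$4*A$4$2 + A$1$1*A$2$4*A$3$2*A$4$3 - A$1$1*A$2$4*A$3$3*A$4$2
 - A$1$2*A$2$1*A$3$3*A$4$4 + A$1$2*A$2$1*A$3$4*A$4$3 + A$1$2*A$2$3*A$3$1*A$4$4 - A$1$2*A$2$3*A$3$4*A$4$1 - A$1$2*A$2$4*A$3$1*A$4$3 + A$1$2*A$2$4*A$3$3*A$4$1
 + A$1$3*A$2$1*A$3$2*A$4$4 - A$1$3*A$2$1*A$3$4*A$4$2 - A$1$3*A$2$2*A$3$1*A$4$4 + A$1$3*A$2$2*A$3$4*A$4$1 + A$1$3*A$2$4*A$3$1*A$4$2 - A$1$3*A$2$4*A$3$2*A$4$1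
 - A$1$4*A$2$1*A$3$2*A$4$3 + A$1$4*A$2$1*A$3$3*A$4$2 + A$1$4*A$2$2*A$3$1*A$4$3 - A$1$4*A$2$2*A$3$3*A$4$1 - A$1$4*A$2$3*A$3$1*A$4$2 + A$1$4*A$2$3*A$3$2*A$4$1"
proof -
  have f1: "finite {2::4, 3, 4}" "1 \<notin> {2::4, 3, 4}" by auto
  have f2: "finite {3::4, 4}" "2 \<notin> {3::4, 4}" by auto
  have f3: "finite {4::4}" "3 \<notin> {4::4}" by auto
  show ?thesis
    unfolding det_def UNIV_4'
    unfolding sum_over_permutations_insert[OF f1]
    unfolding sum_over_permutations_insert[OF f2]
    unfolding sum_over_permutations_insert[OF f3]
    unfolding permutes_sing
    by (simp add: sign_swap_id permutation_swap_id sign_compose permutation_compose sign_id swap_id_eq algebra_simps)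
qed

definition D4 :: "real^4 \<Rightarrow> real^4 \<Rightarrow> real^4 \<Rightarrow> real^4 \<Rightarrow> real" where
  "D4 a b c d = det (vector [a,b,c,d] :: real^4^4)"

lemma D4_wedge: "D4 a b c d = hodge (wedge a b) \<bullet> wedge c d"
  unfolding D4_def det4 inner6 by (simp; algebra)

definition cof :: "real^4 \<Rightarrow> real^4 \<Rightarrow> real^4 \<Rightarrow> real^4" where
  "cof a b c = (\<chi> k. hodge (wedge a b) \<bullet> wedge c (axis k 1))"

lemma cof_comp: "cof a b c $ k = hodge (wedge a b) \<bullet> wedge c (axis k 1)"
  by (simp add: cof_def)

lemma cof_inner: "cof a b c \<bullet> d = D4 a b c d"
  unfolding D4_wedge inner4 cof_comp inner6 by (simp add: axis_def; algebra)

lemma D4_same: "D4 a b c a = 0" "D4 a b c b = 0" "D4 a b c c = 0"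
  unfolding D4_wedge inner6 by (simp_all, algebra+)

lemma cof_orth: "cof a b c \<bullet> a = 0" "cof a b c \<bullet> b = 0" "cof a b c \<bullet> c = 0"
  by (simp_all add: cof_inner D4_same)

lemma gram3: "cof a b c \<bullet> cof a b c = (a\<bullet>a)*(b\<bullet>b)*(c\<bullet>c) + 2*(a\<bullet>b)*(b\<bullet>c)*(a\<bullet>c)
   - (a\<bullet>a)*(b\<bullet>c)^2 - (b\<bullet>b)*(a\<bullet>c)^2 - (c\<bullet>c)*(a\<bullet>b)^2"
  unfolding inner4 cof_comp inner6 by (simp add: axis_def; algebra)

lemma mmt_entry: "((M::real^4^4) ** transpose M) $ i $ j = M$i \<bullet> M$j"
  by (simp add: matrix_matrix_mult_def transpose_def inner_vec_def)

lemma gram4: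
  assumes o: "a \<bullet> b = 0" "a \<bullet> c = 0" "b \<bullet> c = 0"
  shows "(D4 a b c w)^2 = (a\<bullet>a)*(b\<bullet>b)*(c\<bullet>c)*(w\<bullet>w) - (b\<bullet>b)*(c\<bullet>c)*(a\<bullet>w)^2
          - (a\<bullet>a)*(c\<bullet>c)*(b\<bullet>w)^2 - (a\<bullet>a)*(b\<bullet>b)*(c\<bullet>w)^2"
proof -
  let ?M = "vector [a,b,c,w] :: real^4^4"
  have "(D4 a b c w)^2 = det (?M ** transpose ?M)"
    by (simp add: D4_def det_mul power2_eq_square)
  also have "\<dots> = (a\<bullet>a)*(b\<bullet>b)*(c\<bullet>c)*(w\<bullet>w) - (b\<bullet>b)*(c\<bullet>c)*(a\<bullet>w)^2
          - (a\<bullet>a)*(c\<bullet>c)*(b\<bullet>w)^2 - (a\<bullet>a)*(b\<bullet>b)*(c\<bullet>w)^2"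
    unfolding det4 mmt_entry using o by (simp add: inner_commute power2_eq_square; algebra)
  finally show ?thesis .
qed

lemma parseval:
  assumes o: "a \<bullet> b = 0" "a \<bullet> c = 0" "b \<bullet> c = 0"
    and nz: "a \<bullet> a > 0" "b \<bullet> b > 0" "c \<bullet> c > 0"
  shows "w = (w \<bullet> a / (a \<bullet> a)) *\<^sub>R a + (w \<bullet> b / (b \<bullet> b)) *\<^sub>R b + (w \<bullet> c / (c \<bullet> c)) *\<^sub>R c
           + (w \<bullet> cof a b c / (cof a b c \<bullet> cof a b c)) *\<^sub>R cof a b c"
proof -
  define k where "k = cof a b c"
  have K: "k \<bullet> k = (a\<bullet>a)*(b\<bullet>b)*(c\<bullet>c)" unfolding k_def gram3 using o by (simp add: inner_commute)
  have Kp: "k \<bullet> k > 0" using K nz by simp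
  have ka: "k \<bullet> a = 0" "k \<bullet> b = 0" "k \<bullet> c = 0" unfolding k_def by (simp_all add: cof_orth)
  define d where "d = w - ((w \<bullet> a / (a \<bullet> a)) *\<^sub>R a + (w \<bullet> b / (b \<bullet> b)) *\<^sub>R b + (w \<bullet> c / (c \<bullet> c)) *\<^sub>R c
           + (w \<bullet> k / (k \<bullet> k)) *\<^sub>R k)"
  have da: "a \<bullet> d = 0" "b \<bullet> d = 0" "c \<bullet> d = 0" "k \<bullet> d = 0"
    unfolding d_def using o ka nz Kp
    by (simp_all add: inner_diff_right inner_add_right inner_commute)
  have "(D4 a b c d)^2 = (a\<bullet>a)*(b\<bullet>b)*(c\<bullet>c)*(d\<bullet>d)"
    using gram4[OF o, of d] da by simp
  moreover have "D4 a b c d = 0" using da(4) unfolding k_def cof_inner by simp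
  ultimately have "d \<bullet> d = 0" using nz by simp
  then have "d = 0" by simp
  then show ?thesis unfolding d_def k_def by (simp add: algebra_simps)
qed

lemma dx_at: "(f has_derivative f') (at z) \<Longrightarrow> dx f z = f' 1"
  unfolding dx_def by (metis frechet_derivative_at)
lemma dy_at: "(f has_derivative f') (at z) \<Longrightarrow> dy f z = f' \<i>"
  unfolding dy_def by (metis frechet_derivative_at)

lemma complex_decomp: "h = Re h *\<^sub>R (1::complex) + Im h *\<^sub>R \<i>"
  by (simp add: complex_eq_iff)

lemma deriv_repr:
  assumes "f differentiable (at z)"
  shows "(f has_derivative (\<lambda>h. Re h *\<^sub>R dx f z + Im h *\<^sub>R dy f z)) (at z)"
proof -
  have d: "(f has_derivative frechet_derivative f (at z)) (at z)"
    using assms frechet_derivative_works by blast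
  have l: "linear (frechet_derivative f (at z))" using has_derivative_linear[OF d] .
  have "frechet_derivative f (at z) h = Re h *\<^sub>R dx f z + Im h *\<^sub>R dy f z" for h
    unfolding dx_def dy_def
    by (subst complex_decomp[of h]) (simp add: linear_add[OF l] linear_scale[OF l])
  then show ?thesis by (intro has_derivative_eq_rhs[OF d]) (simp add: fun_eq_iff)
qed


lemma dx_add: assumes f: "f differentiable (at z)" and g: "g differentiable (at z)"
  shows "dx (\<lambda>w. f w + g w) z = dx f z + dx g z"
proof -
  have "((\<lambda>w. f w + g w) has_derivative (\<lambda>h. (Re h *\<^sub>R dx f z + Im h *\<^sub>R dy f z) + (Re h *\<^sub>R dx g z + Im h *\<^sub>R dy g z))) (at z)"
    by (rule has_derivative_add[OF deriv_repr[OF f] deriv_repr[OF g]])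
  from dx_at[OF this] show ?thesis by simp
qed
lemma dy_add: assumes f: "f differentiable (at z)" and g: "g differentiable (at z)"
  shows "dy (\<lambda>w. f w + g w) z = dy f z + dy g z"
proof -
  have "((\<lambda>w. f w + g w) has_derivative (\<lambda>h. (Re h *\<^sub>R dx f z + Im h *\<^sub>R dy f z) + (Re h *\<^sub>R dx g z + Im h *\<^sub>R dy g z))) (at z)"
    by (rule has_derivative_add[OF deriv_repr[OF f] deriv_repr[OF g]])
  from dy_at[OF this] show ?thesis by simp
qed

lemma dx_bil: assumes B: "bounded_bilinear B" and f: "f differentiable (at z)" and g: "g differentiable (at z)"
  shows "dx (\<lambda>w. B (f w) (g w)) z = B (dx f z) (g z) + B (f z) (dx g z)"
proof -
  have "((\<lambda>w. B (f w) (g w)) has_derivative (\<lambda>h. B (f z) (Re h *\<^sub>R dx g z + Im h *\<^sub>R dy g z) +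
      B (Re h *\<^sub>R dx f z + Im h *\<^sub>R dy f z) (g z))) (at z)"
    by (rule bounded_bilinear.FDERIV[OF B deriv_repr[OF f] deriv_repr[OF g]])
  from dx_at[OF this] show ?thesis by (simp add: add.commute)
qed
lemma dy_bil: assumes B: "bounded_bilinear B" and f: "f differentiable (at z)" and g: "g differentiable (at z)"
  shows "dy (\<lambda>w. B (f w) (g w)) z = B (dy f z) (g z) + B (f z) (dy g z)"
proof -
  have "((\<lambda>w. B (f w) (g w)) has_derivative (\<lambda>h. B (f z) (Re h *\<^sub>R dx g z + Im h *\<^sub>R dy g z) +
      B (Re h *\<^sub>R dx f z + Im h *\<^sub>R dy f z) (g z))) (at z)"
    by (rule bounded_bilinear.FDERIV[OF B deriv_repr[OF f] deriv_repr[OF g]])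
  from dy_at[OF this] show ?thesis by (simp add: add.commute)
qed

lemma dx_lin: assumes L: "bounded_linear L" and f: "f differentiable (at z)"
  shows "dx (\<lambda>w. L (f w)) z = L (dx f z)"
proof -
  have "((\<lambda>w. L (f w)) has_derivative (\<lambda>h. L (Re h *\<^sub>R dx f z + Im h *\<^sub>R dy f z))) (at z)"
    by (rule bounded_linear.has_derivative[OF L deriv_repr[OF f]])
  from dx_at[OF this] show ?thesis by simp
qed
lemma dy_lin: assumes L: "bounded_linear L" and f: "f differentiable (at z)"
  shows "dy (\<lambda>w. L (f w)) z = L (dy f z)"
proof -
  have "((\<lambda>w. L (f w)) has_derivative (\<lambda>h. L (Re h *\<^sub>R dx f z + Im h *\<^sub>R dy f z))) (at z)"
    by (rule bounded_linear.has_derivative[OF L deriv_repr[OF f]])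
  from dy_at[OF this] show ?thesis by simp
qed

lemma dx_const [simp]: "dx (\<lambda>w. c) z = 0" by (rule dx_at) (rule has_derivative_const)
lemma dy_const [simp]: "dy (\<lambda>w. c) z = 0" by (rule dy_at) (rule has_derivative_const)

lemma dx_exp: fixes v :: "complex \<Rightarrow> real" assumes v: "v differentiable (at z)" shows "dx (\<lambda>w. exp (v w)) z = exp (v z) * dx v z"
proof -
  have "((\<lambda>w. exp (v w)) has_derivative (\<lambda>h. (Re h *\<^sub>R dx v z + Im h *\<^sub>R dy v z) * exp (v z))) (at z)"
    by (rule has_derivative_exp[OF deriv_repr[OF v]])
  from dx_at[OF this] show ?thesis by simp
qed
lemma dy_exp: fixes v :: "complex \<Rightarrow> real" assumes v: "v differentiable (at z)" shows "dy (\<lambda>w. exp (v w)) z = exp (v z) * dy v z"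
proof -
  have "((\<lambda>w. exp (v w)) has_derivative (\<lambda>h. (Re h *\<^sub>R dx v z + Im h *\<^sub>R dy v z) * exp (v z))) (at z)"
    by (rule has_derivative_exp[OF deriv_repr[OF v]])
  from dy_at[OF this] show ?thesis by simp
qed

lemma bil_differentiable: "bounded_bilinear B \<Longrightarrow> f differentiable (at z) \<Longrightarrow> g differentiable (at z) \<Longrightarrow>
   (\<lambda>w. B (f w) (g w)) differentiable (at z)"
  unfolding differentiable_def by (blast intro: bounded_bilinear.FDERIV)
lemma lin_differentiable: "bounded_linear L \<Longrightarrow> f differentiable (at z) \<Longrightarrow> (\<lambda>w. L (f w)) differentiable (at z)"
  unfolding differentiable_def by (blast intro: bounded_linear.has_derivative)
lemma exp_differentiable: fixes v :: "complex \<Rightarrow> real" shows "v differentiable (at z) \<Longrightarrow> (\<lambda>w. exp (v w)) differentiable (at z)"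
  unfolding differentiable_def by (blast intro: has_derivative_exp)

section \<open>Smoothness by order\<close>

fun Sm :: "nat \<Rightarrow> (complex \<Rightarrow> 'a::real_normed_vector) \<Rightarrow> bool" where
  "Sm 0 f = (\<forall>z. f differentiable (at z))"
| "Sm (Suc n) f = ((\<forall>z. f differentiable (at z)) \<and> Sm n (dx f) \<and> Sm n (dy f))"

lemma Sm_diff: "Sm n f \<Longrightarrow> f differentiable (at z)"
  by (cases n) (simp only: Sm.simps; blast)+

lemma Sm_SucI: "(\<And>z. f differentiable (at z)) \<Longrightarrow> Sm n (dx f) \<Longrightarrow> Sm n (dy f) \<Longrightarrow> Sm (Suc n) f"
  unfolding Sm.simps(2) by blast
lemma Sm_SucD: "Sm (Suc n) f \<Longrightarrow> Sm n (dx f)" "Sm (Suc n) f \<Longrightarrow> Sm n (dy f)"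
  unfolding Sm.simps(2) by blast+
lemma Sm_0I: "(\<And>z. f differentiable (at z)) \<Longrightarrow> Sm 0 f"
  unfolding Sm.simps(1) by blast

lemma Sm_mono: "Sm (Suc n) f \<Longrightarrow> Sm n f"
proof (induction n arbitrary: f)
  case 0 then show ?case by (intro Sm_0I, rule Sm_diff)
next
  case (Suc n)
  show ?case
    by (rule Sm_SucI, rule Sm_diff[OF Suc.prems], rule Suc.IH, rule Sm_SucD(1)[OF Suc.prems],
        rule Suc.IH, rule Sm_SucD(2)[OF Suc.prems])
qed

lemma smooth_Sm: "smooth f \<longleftrightarrow> (\<forall>n. Sm n f)"
proof
  assume s: "smooth f"
  have "g \<in> partials f \<Longrightarrow> Sm n g" for n g
  proof (induction n arbitrary: g)
    case 0
    have "\<forall>z. g differentiable (at z)" using s 0 unfolding smooth_def by blast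
    then show ?case by (blast intro: Sm_0I)
  next
    case (Suc n)
    have "\<forall>z. g differentiable (at z)" using s Suc.prems unfolding smooth_def by blast
    moreover have "Sm n (dx g)" by (rule Suc.IH, rule partials.stepx, rule Suc.prems)
    moreover have "Sm n (dy g)" by (rule Suc.IH, rule partials.stepy, rule Suc.prems)
    ultimately show ?case by (blast intro: Sm_SucI)
  qed
  then show "\<forall>n. Sm n f" using partials.base by blast
next
  assume a: "\<forall>n. Sm n f"
  have "g \<in> partials f \<Longrightarrow> \<forall>n. Sm n g" for g
  proof (induction rule: partials.induct)
    case base then show ?case using a by blast
  next
    case (stepx g)
    show ?case
    proof
      fix n show "Sm n (dx g)" using stepx.IH Sm_SucD(1) by blast
    qed
  next
    case (stepy g)
    show ?case
    proof
      fix n show "Sm n (dy g)" using stepy.IH Sm_SucD(2) by blast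
    qed
  qed
  then show "smooth f" unfolding smooth_def using Sm_diff by blast
qed

lemma smooth_diff: "smooth f \<Longrightarrow> f differentiable (at z)"
  using smooth_Sm Sm_diff by blast
lemma smooth_dx: "smooth f \<Longrightarrow> smooth (dx f)"
  unfolding smooth_Sm using Sm_SucD by blast
lemma smooth_dy: "smooth f \<Longrightarrow> smooth (dy f)"
  unfolding smooth_Sm using Sm_SucD by blast

lemma Sm_const: "Sm n (\<lambda>z. c)"
proof (induction n arbitrary: c)
  case 0 then show ?case by (intro Sm_0I) simp
next
  case (Suc n)
  have "dx (\<lambda>z. c) = (\<lambda>z. 0)" "dy (\<lambda>z. c) = (\<lambda>z. 0)" by (auto simp: fun_eq_iff)
  then show ?case using Suc by (intro Sm_SucI) simp_all
qed

lemma Sm_add: "Sm n f \<Longrightarrow> Sm n g \<Longrightarrow> Sm n (\<lambda>z. f z + g z)"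
proof (induction n arbitrary: f g)
  case 0 then show ?case by (intro Sm_0I) (rule differentiable_add[OF Sm_diff Sm_diff])
next
  case (Suc n)
  have df: "\<And>z. f differentiable (at z)" "\<And>z. g differentiable (at z)" using Sm_diff[OF Suc.prems(1)] Sm_diff[OF Suc.prems(2)] by auto
  have e: "dx (\<lambda>z. f z + g z) = (\<lambda>z. dx f z + dx g z)" "dy (\<lambda>z. f z + g z) = (\<lambda>z. dy f z + dy g z)"
    by (auto simp only: fun_eq_iff dx_add dy_add df)
  show ?case
    apply (rule Sm_SucI)
      apply (rule differentiable_add[OF df])
     apply (unfold e)
     apply (rule Suc.IH; rule Sm_SucD; rule Suc.prems)
    apply (rule Suc.IH; rule Sm_SucD; rule Suc.prems)
    done
qed

lemma Sm_bil: "bounded_bilinear B \<Longrightarrow> Sm n f \<Longrightarrow> Sm n g \<Longrightarrow> Sm n (\<lambda>z. B (f z) (g z))"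
proof (induction n arbitrary: f g)
  case 0 then show ?case by (intro Sm_0I) (rule bil_differentiable[OF _ Sm_diff Sm_diff])
next
  case (Suc n)
  have df: "\<And>z. f differentiable (at z)" "\<And>z. g differentiable (at z)" using Sm_diff[OF Suc.prems(2)] Sm_diff[OF Suc.prems(3)] by auto
  have e: "dx (\<lambda>z. B (f z) (g z)) = (\<lambda>z. B (dx f z) (g z) + B (f z) (dx g z))"
       "dy (\<lambda>z. B (f z) (g z)) = (\<lambda>z. B (dy f z) (g z) + B (f z) (dy g z))"
    by (simp_all add: fun_eq_iff dx_bil[OF Suc.prems(1) df] dy_bil[OF Suc.prems(1) df])
  have s: "Sm n f" "Sm n g" using Sm_mono[OF Suc.prems(2)] Sm_mono[OF Suc.prems(3)] .
  have s2: "Sm n (dx f)" "Sm n (dy f)" "Sm n (dx g)" "Sm n (dy g)"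
    using Sm_SucD[OF Suc.prems(2)] Sm_SucD[OF Suc.prems(3)] .
  show ?case
    apply (rule Sm_SucI)
      apply (rule bil_differentiable[OF Suc.prems(1) df])
     apply (unfold e)
     apply (rule Sm_add; rule Suc.IH[OF Suc.prems(1)]; rule s s2)
    apply (rule Sm_add; rule Suc.IH[OF Suc.prems(1)]; rule s s2)
    done
qed

lemma Sm_lin: "bounded_linear L \<Longrightarrow> Sm n f \<Longrightarrow> Sm n (\<lambda>z. L (f z))"
proof (induction n arbitrary: f)
  case 0 then show ?case by (intro Sm_0I) (rule lin_differentiable[OF _ Sm_diff])
next
  case (Suc n)
  have df: "\<And>z. f differentiable (at z)" using Sm_diff[OF Suc.prems(2)] by auto
  have e: "dx (\<lambda>z. L (f z)) = (\<lambda>z. L (dx f z))" "dy (\<lambda>z. L (f z)) = (\<lambda>z. L (dy f z))"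
    by (auto simp only: fun_eq_iff dx_lin dy_lin df Suc.prems(1))
  have s2: "Sm n (dx f)" "Sm n (dy f)" using Sm_SucD[OF Suc.prems(2)] .
  show ?case
    apply (rule Sm_SucI)
      apply (rule lin_differentiable[OF Suc.prems(1) df])
     apply (unfold e)
     apply (rule Suc.IH[OF Suc.prems(1)]; rule s2)
    apply (rule Suc.IH[OF Suc.prems(1)]; rule s2)
    done
qed

lemma Sm_exp: fixes v :: "complex \<Rightarrow> real" shows "Sm n v \<Longrightarrow> Sm n (\<lambda>z. exp (v z))"
proof (induction n arbitrary: v)
  case 0 then show ?case by (intro Sm_0I) (rule exp_differentiable[OF Sm_diff])
next
  case (Suc n)
  have df: "\<And>z. v differentiable (at z)" using Sm_diff[OF Suc.prems] by auto
  have e: "dx (\<lambda>z. exp (v z)) = (\<lambda>z. exp (v z) * dx v z)" "dy (\<lambda>z. exp (v z)) = (\<lambda>z. exp (v z) * dy v z)"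
    by (auto simp only: fun_eq_iff dx_exp dy_exp df)
  have s: "Sm n v" using Sm_mono[OF Suc.prems] .
  have s2: "Sm n (dx v)" "Sm n (dy v)" using Sm_SucD[OF Suc.prems] .
  show ?case
    apply (rule Sm_SucI)
      apply (rule exp_differentiable[OF df])
     apply (unfold e)
     apply (rule Sm_bil[OF bounded_bilinear_mult], rule Suc.IH, rule s, rule s2(1))
    apply (rule Sm_bil[OF bounded_bilinear_mult], rule Suc.IH, rule s, rule s2(2))
    done
qed

lemma smooth_const: "smooth (\<lambda>z. c)" unfolding smooth_Sm using Sm_const by blast
lemma smooth_add: "smooth f \<Longrightarrow> smooth g \<Longrightarrow> smooth (\<lambda>z. f z + g z)"
  unfolding smooth_Sm by (intro allI, rule Sm_add; erule spec)
lemma smooth_bil: "bounded_bilinear B \<Longrightarrow> smooth f \<Longrightarrow> smooth g \<Longrightarrow> smooth (\<lambda>z. B (f z) (g z))"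
  unfolding smooth_Sm by (intro allI, rule Sm_bil, assumption; erule spec)
lemma smooth_lin: "bounded_linear L \<Longrightarrow> smooth f \<Longrightarrow> smooth (\<lambda>z. L (f z))"
  unfolding smooth_Sm by (intro allI, rule Sm_lin, assumption; erule spec)
lemma smooth_exp: fixes v :: "complex \<Rightarrow> real" shows "smooth v \<Longrightarrow> smooth (\<lambda>z. exp (v z))"
  unfolding smooth_Sm by (intro allI, rule Sm_exp; erule spec)

lemma deriv_x_line:
  fixes f :: "complex \<Rightarrow> real"
  assumes "f differentiable (at (w + of_real s))"
  shows "((\<lambda>s. f (w + of_real s)) has_real_derivative dx f (w + of_real s)) (at s)"
proof -
  have d: "((\<lambda>s. w + of_real s) has_derivative (\<lambda>s. of_real s)) (at s)"
    by (auto intro!: derivative_eq_intros)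
  have "((\<lambda>s. f (w + of_real s)) has_derivative
     (\<lambda>h. Re (of_real h) *\<^sub>R dx f (w + of_real s) + Im (of_real h) *\<^sub>R dy f (w + of_real s))) (at s)"
    using has_derivative_compose[OF d deriv_repr[OF assms]] by simp
  then show ?thesis unfolding has_field_derivative_def
    by (rule has_derivative_eq_rhs) (simp add: fun_eq_iff mult.commute)
qed

lemma deriv_y_line:
  fixes f :: "complex \<Rightarrow> real"
  assumes "f differentiable (at (w + of_real s * \<i>))"
  shows "((\<lambda>s. f (w + of_real s * \<i>)) has_real_derivative dy f (w + of_real s * \<i>)) (at s)"
proof -
  have d: "((\<lambda>s. w + of_real s * \<i>) has_derivative (\<lambda>s. of_real s * \<i>)) (at s)"
    by (auto intro!: derivative_eq_intros)
  have "((\<lambda>s. f (w + of_real s * \<i>)) has_derivative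
     (\<lambda>h. Re (of_real h * \<i>) *\<^sub>R dx f (w + of_real s * \<i>) + Im (of_real h * \<i>) *\<^sub>R dy f (w + of_real s * \<i>))) (at s)"
    using has_derivative_compose[OF d deriv_repr[OF assms]] by simp
  then show ?thesis unfolding has_field_derivative_def
    by (rule has_derivative_eq_rhs) (simp add: fun_eq_iff mult.commute)
qed


lemma clairaut_delta:
  fixes g :: "complex \<Rightarrow> real"
  assumes s: "smooth g" and h: "h > 0"
  shows "\<exists>\<xi> \<eta>. cmod (\<xi> - z) \<le> 2*h \<and> cmod (\<eta> - z) \<le> 2*h \<and>
     dy (dx g) \<xi> = dx (dy g) \<eta>"
proof -
  have dg: "\<And>w. g differentiable (at w)" using smooth_diff[OF s] .
  have dgx: "\<And>w. dx g differentiable (at w)" using smooth_diff[OF smooth_dx[OF s]] .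
  have dgy: "\<And>w. dy g differentiable (at w)" using smooth_diff[OF smooth_dy[OF s]] .
  define \<Delta> where "\<Delta> = g (z + of_real h + of_real h * \<i>) - g (z + of_real h) - g (z + of_real h * \<i>) + g z"
  have "\<exists>s1. 0 < s1 \<and> s1 < h \<and>
     (g (z + of_real h * \<i> + of_real h) - g (z + of_real h)) - (g (z + of_real h * \<i> + of_real 0) - g (z + of_real 0))
      = (h - 0) * (dx g (z + of_real h * \<i> + of_real s1) - dx g (z + of_real s1))"
    by (rule MVT2[OF h], rule DERIV_diff; rule deriv_x_line, rule dg)
  then obtain s1 where s1: "0 < s1" "s1 < h"
    "\<Delta> = h * (dx g (z + of_real s1 + of_real h * \<i>) - dx g (z + of_real s1 + of_real 0 * \<i>))"
    unfolding \<Delta>_def by (auto simp: algebra_simps)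
  have "\<exists>r1. 0 < r1 \<and> r1 < h \<and>
     dx g (z + of_real s1 + of_real h * \<i>) - dx g (z + of_real s1 + of_real 0 * \<i>)
      = (h - 0) * dy (dx g) (z + of_real s1 + of_real r1 * \<i>)"
    by (rule MVT2[OF h], rule deriv_y_line, rule dgx)
  then obtain r1 where r1: "0 < r1" "r1 < h"
    "\<Delta> = h * (h * dy (dx g) (z + of_real s1 + of_real r1 * \<i>))"
    using s1(3) by auto
  have "\<exists>r2. 0 < r2 \<and> r2 < h \<and>
     (g (z + of_real h + of_real h * \<i>) - g (z + of_real h * \<i>)) - (g (z + of_real h + of_real 0 * \<i>) - g (z + of_real 0 * \<i>))
      = (h - 0) * (dy g (z + of_real h + of_real r2 * \<i>) - dy g (z + of_real r2 * \<i>))"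
    by (rule MVT2[OF h], rule DERIV_diff; rule deriv_y_line, rule dg)
  then obtain r2 where r2: "0 < r2" "r2 < h"
    "\<Delta> = h * (dy g (z + of_real r2 * \<i> + of_real h) - dy g (z + of_real r2 * \<i> + of_real 0))"
    unfolding \<Delta>_def by (auto simp: algebra_simps)
  have "\<exists>s2. 0 < s2 \<and> s2 < h \<and>
     dy g (z + of_real r2 * \<i> + of_real h) - dy g (z + of_real r2 * \<i> + of_real 0)
      = (h - 0) * dx (dy g) (z + of_real r2 * \<i> + of_real s2)"
    by (rule MVT2[OF h], rule deriv_x_line, rule dgy)
  then obtain s2 where s2: "0 < s2" "s2 < h"
    "\<Delta> = h * (h * dx (dy g) (z + of_real r2 * \<i> + of_real s2))"
    using r2(3) by auto
  have eq: "dy (dx g) (z + of_real s1 + of_real r1 * \<i>) = dx (dy g) (z + of_real r2 * \<i> + of_real s2)"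
    using r1(3) s2(3) h by simp
  have n1: "cmod (z + of_real s1 + of_real r1 * \<i> - z) \<le> 2*h"
  proof -
    have "cmod (z + of_real s1 + of_real r1 * \<i> - z) = cmod (of_real s1 + of_real r1 * \<i>)" by simp
    also have "\<dots> \<le> cmod (of_real s1) + cmod (of_real r1 * \<i>)" by (rule norm_triangle_ineq)
    also have "\<dots> \<le> 2*h" using s1 r1 by (simp add: norm_mult)
    finally show ?thesis .
  qed
  have n2: "cmod (z + of_real r2 * \<i> + of_real s2 - z) \<le> 2*h"
  proof -
    have "cmod (z + of_real r2 * \<i> + of_real s2 - z) = cmod (of_real r2 * \<i> + of_real s2)" by simp
    also have "\<dots> \<le> cmod (of_real r2 * \<i>) + cmod (of_real s2)" by (rule norm_triangle_ineq)
    also have "\<dots> \<le> 2*h" using s2 r2 by (simp add: norm_mult)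
    finally show ?thesis .
  qed
  show ?thesis using eq n1 n2 by blast
qed

lemma clairaut_real:
  fixes g :: "complex \<Rightarrow> real"
  assumes s: "smooth g"
  shows "dy (dx g) z = dx (dy g) z"
proof (rule ccontr)
  assume ne: "dy (dx g) z \<noteq> dx (dy g) z"
  define e where "e = \<bar>dy (dx g) z - dx (dy g) z\<bar> / 2"
  have e: "e > 0" using ne unfolding e_def by simp
  have c1: "continuous (at z) (dy (dx g))"
    by (rule differentiable_imp_continuous_within, rule smooth_diff, rule smooth_dy, rule smooth_dx, rule s)
  have c2: "continuous (at z) (dx (dy g))"
    by (rule differentiable_imp_continuous_within, rule smooth_diff, rule smooth_dx, rule smooth_dy, rule s)
  obtain d1 where d1: "d1 > 0" "\<And>w. dist w z < d1 \<Longrightarrow> dist (dy (dx g) w) (dy (dx g) z) < e"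
    using c1 e unfolding continuous_at_eps_delta by blast
  obtain d2 where d2: "d2 > 0" "\<And>w. dist w z < d2 \<Longrightarrow> dist (dx (dy g) w) (dx (dy g) z) < e"
    using c2 e unfolding continuous_at_eps_delta by blast
  define h where "h = min d1 d2 / 4"
  have h: "h > 0" using d1 d2 unfolding h_def by simp
  obtain \<xi> \<eta> where xe: "cmod (\<xi> - z) \<le> 2*h" "cmod (\<eta> - z) \<le> 2*h" "dy (dx g) \<xi> = dx (dy g) \<eta>"
    using clairaut_delta[OF s h] by blast
  have "dist \<xi> z < d1" "dist \<eta> z < d2" using xe d1 d2 unfolding h_def dist_norm by auto
  then have "\<bar>dy (dx g) \<xi> - dy (dx g) z\<bar> < e" "\<bar>dx (dy g) \<eta> - dx (dy g) z\<bar> < e"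
    using d1 d2 by (auto simp: dist_real_def)
  then show False using xe(3) unfolding e_def by (auto simp: abs_if split: if_splits)
qed


lemma smooth_comp: "smooth F \<Longrightarrow> smooth (\<lambda>z. F z $ i)"
  by (rule smooth_lin[OF bounded_linear_vec_nth])

lemma dx_comp: "F differentiable (at z) \<Longrightarrow> dx (\<lambda>w. F w $ i) z = dx F z $ i"
  by (rule dx_lin[OF bounded_linear_vec_nth])
lemma dy_comp: "F differentiable (at z) \<Longrightarrow> dy (\<lambda>w. F w $ i) z = dy F z $ i"
  by (rule dy_lin[OF bounded_linear_vec_nth])

lemma clairaut:
  fixes F :: "complex \<Rightarrow> real^'n"
  assumes s: "smooth F"
  shows "dy (dx F) z = dx (dy F) z"
proof -
  have "dy (dx F) z $ i = dx (dy F) z $ i" for i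
  proof -
    have dF: "\<And>w. F differentiable (at w)" using smooth_diff[OF s] .
    have dFx: "\<And>w. dx F differentiable (at w)" using smooth_diff[OF smooth_dx[OF s]] .
    have dFy: "\<And>w. dy F differentiable (at w)" using smooth_diff[OF smooth_dy[OF s]] .
    have ex: "dx (\<lambda>w. F w $ i) = (\<lambda>w. dx F w $ i)" by (rule ext, rule dx_comp[OF dF])
    have ey: "dy (\<lambda>w. F w $ i) = (\<lambda>w. dy F w $ i)" by (rule ext, rule dy_comp[OF dF])
    have "dy (dx (\<lambda>w. F w $ i)) z = dx (dy (\<lambda>w. F w $ i)) z"
      by (rule clairaut_real, rule smooth_comp[OF s])
    then show ?thesis unfolding ex ey dy_comp[OF dFx] dx_comp[OF dFy] .
  qed
  then show ?thesis by (simp add: vec_eq_iff)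
qed

lemma bounded_bilinear_inner': "bounded_bilinear ((\<bullet>) :: 'a::real_inner \<Rightarrow> 'a \<Rightarrow> real)"
  by (rule bounded_bilinear_inner)

lemma diff_wedge [simp]: "P differentiable (at z) \<Longrightarrow> Q differentiable (at z) \<Longrightarrow> (\<lambda>w. wedge (P w) (Q w)) differentiable (at z)"
  by (rule bil_differentiable[OF bounded_bilinear_wedge])
lemma diff_scaleR [simp]: "r differentiable (at z) \<Longrightarrow> Q differentiable (at z) \<Longrightarrow> (\<lambda>w. r w *\<^sub>R (Q w :: 'a::real_normed_vector)) differentiable (at z)"
  by (rule bil_differentiable[OF bounded_bilinear_scaleR])
lemma diff_scaleC [simp]: "Q differentiable (at z) \<Longrightarrow> (\<lambda>w. c *\<^sub>R (Q w :: 'a::real_normed_vector)) differentiable (at z)"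
  by (rule lin_differentiable[OF bounded_linear_scaleR_right])
lemma diff_add [simp]: "P differentiable (at z) \<Longrightarrow> Q differentiable (at z) \<Longrightarrow> (\<lambda>w. P w + Q w) differentiable (at z)"
  by (rule differentiable_add)
lemma diff_inner [simp]: "P differentiable (at z) \<Longrightarrow> Q differentiable (at z) \<Longrightarrow> (\<lambda>w. (P w :: 'a::real_inner) \<bullet> Q w) differentiable (at z)"
  by (rule bil_differentiable[OF bounded_bilinear_inner])
lemma diff_mult [simp]: "P differentiable (at z) \<Longrightarrow> Q differentiable (at z) \<Longrightarrow> (\<lambda>w. (P w :: real) * Q w) differentiable (at z)"
  by (rule bil_differentiable[OF bounded_bilinear_mult])
lemma diff_expc [simp]: "(v :: complex \<Rightarrow> real) differentiable (at z) \<Longrightarrow> (\<lambda>w. exp (c * v w)) differentiable (at z)"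
  by (rule exp_differentiable, rule lin_differentiable[OF bounded_linear_mult_right])

lemma dx_wedge [simp]: "P differentiable (at z) \<Longrightarrow> Q differentiable (at z) \<Longrightarrow>
  dx (\<lambda>w. wedge (P w) (Q w)) z = wedge (dx P z) (Q z) + wedge (P z) (dx Q z)"
  by (rule dx_bil[OF bounded_bilinear_wedge])
lemma dy_wedge [simp]: "P differentiable (at z) \<Longrightarrow> Q differentiable (at z) \<Longrightarrow>
  dy (\<lambda>w. wedge (P w) (Q w)) z = wedge (dy P z) (Q z) + wedge (P z) (dy Q z)"
  by (rule dy_bil[OF bounded_bilinear_wedge])
lemma dx_inner [simp]: "P differentiable (at z) \<Longrightarrow> Q differentiable (at z) \<Longrightarrow>
  dx (\<lambda>w. (P w :: 'a::real_inner) \<bullet> Q w) z = dx P z \<bullet> Q z + P z \<bullet> dx Q z"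
  by (rule dx_bil[OF bounded_bilinear_inner])
lemma dy_inner [simp]: "P differentiable (at z) \<Longrightarrow> Q differentiable (at z) \<Longrightarrow>
  dy (\<lambda>w. (P w :: 'a::real_inner) \<bullet> Q w) z = dy P z \<bullet> Q z + P z \<bullet> dy Q z"
  by (rule dy_bil[OF bounded_bilinear_inner])
lemma dx_scaleR [simp]: "r differentiable (at z) \<Longrightarrow> Q differentiable (at z) \<Longrightarrow>
  dx (\<lambda>w. r w *\<^sub>R (Q w :: 'a::real_normed_vector)) z = dx r z *\<^sub>R Q z + r z *\<^sub>R dx Q z"
  by (rule dx_bil[OF bounded_bilinear_scaleR])
lemma dy_scaleR [simp]: "r differentiable (at z) \<Longrightarrow> Q differentiable (at z) \<Longrightarrow>
  dy (\<lambda>w. r w *\<^sub>R (Q w :: 'a::real_normed_vector)) z = dy r z *\<^sub>R Q z + r z *\<^sub>R dy Q z"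
  by (rule dy_bil[OF bounded_bilinear_scaleR])
lemma dx_scaleC [simp]: "Q differentiable (at z) \<Longrightarrow>
  dx (\<lambda>w. c *\<^sub>R (Q w :: 'a::real_normed_vector)) z = c *\<^sub>R dx Q z"
  by (rule dx_lin[OF bounded_linear_scaleR_right])
lemma dy_scaleC [simp]: "Q differentiable (at z) \<Longrightarrow>
  dy (\<lambda>w. c *\<^sub>R (Q w :: 'a::real_normed_vector)) z = c *\<^sub>R dy Q z"
  by (rule dy_lin[OF bounded_linear_scaleR_right])
lemma dx_mult [simp]: "P differentiable (at z) \<Longrightarrow> Q differentiable (at z) \<Longrightarrow>
  dx (\<lambda>w. (P w :: real) * Q w) z = dx P z * Q z + P z * dx Q z"
  by (rule dx_bil[OF bounded_bilinear_mult])
lemma dy_mult [simp]: "P differentiable (at z) \<Longrightarrow> Q differentiable (at z) \<Longrightarrow>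
  dy (\<lambda>w. (P w :: real) * Q w) z = dy P z * Q z + P z * dy Q z"
  by (rule dy_bil[OF bounded_bilinear_mult])
lemma dx_add' [simp]: "P differentiable (at z) \<Longrightarrow> Q differentiable (at z) \<Longrightarrow>
  dx (\<lambda>w. P w + Q w) z = dx P z + dx Q z"
  by (rule dx_add)
lemma dy_add' [simp]: "P differentiable (at z) \<Longrightarrow> Q differentiable (at z) \<Longrightarrow>
  dy (\<lambda>w. P w + Q w) z = dy P z + dy Q z"
  by (rule dy_add)
lemma dx_expc [simp]: "(v :: complex \<Rightarrow> real) differentiable (at z) \<Longrightarrow> dx (\<lambda>w. exp (c * v w)) z = exp (c * v z) * (c * dx v z)"
proof -
  assume d: "v differentiable (at z)"
  have d2: "(\<lambda>w. c * v w) differentiable (at z)" by (rule lin_differentiable[OF bounded_linear_mult_right d])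
  show ?thesis using dx_exp[OF d2] dx_lin[OF bounded_linear_mult_right d, of c] by simp
qed
lemma dy_expc [simp]: "(v :: complex \<Rightarrow> real) differentiable (at z) \<Longrightarrow> dy (\<lambda>w. exp (c * v w)) z = exp (c * v z) * (c * dy v z)"
proof -
  assume d: "v differentiable (at z)"
  have d2: "(\<lambda>w. c * v w) differentiable (at z)" by (rule lin_differentiable[OF bounded_linear_mult_right d])
  show ?thesis using dy_exp[OF d2] dy_lin[OF bounded_linear_mult_right d, of c] by simp
qed

lemma smooth_expc: "smooth (v :: complex \<Rightarrow> real) \<Longrightarrow> smooth (\<lambda>w. exp (c * v w))"
  by (rule smooth_exp, rule smooth_lin[OF bounded_linear_mult_right])

definition K :: "real^6 \<Rightarrow> real^4 \<Rightarrow> real^4" where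
  "K w c = (\<chi> k. hodge w \<bullet> wedge c (axis k 1))"

lemma cof_K: "cof a b c = K (wedge a b) c" by (simp add: cof_def K_def)

lemma bounded_bilinear_K: "bounded_bilinear K"
proof -
  have "bilinear K"
    unfolding bilinear_def
    by (auto intro!: linearI simp: K_def vec_eq_iff hodge_add hodge_scaleR inner_add_left inner_add_right
      wedge_add_left wedge_scaleR_left)
  then show ?thesis by (rule bilinear_conv_bounded_bilinear[THEN iffD1])
qed

lemma smooth_cof: "smooth a \<Longrightarrow> smooth b \<Longrightarrow> smooth c \<Longrightarrow> smooth (\<lambda>z. cof (a z) (b z) (c z))"
  unfolding cof_K by (rule smooth_bil[OF bounded_bilinear_K], rule smooth_bil[OF bounded_bilinear_wedge])

locale surf =
  fixes F :: "complex \<Rightarrow> real^4" and v :: "complex \<Rightarrow> real" and t :: real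
  assumes v_smooth: "smooth v"
    and Fmin: "isometric_minimal_immersion S3 TanS3 F (\<lambda>z. exp (2 * v z))"
    and Fhopf: "\<forall>z. hopf_S3 F z = \<i> / 2 * exp (\<i> * complex_of_real t)"
begin

lemma sF: "smooth F" using Fmin unfolding isometric_minimal_immersion_def isometric_immersion_def by blast
lemma iso: "dx F z \<bullet> dx F z = exp (2 * v z)" "dy F z \<bullet> dy F z = exp (2 * v z)" "dx F z \<bullet> dy F z = 0"
  using Fmin unfolding isometric_minimal_immersion_def isometric_immersion_def by blast+
lemma FF: "F z \<bullet> F z = 1"
  using Fmin unfolding isometric_minimal_immersion_def S3_def by (simp add: norm_eq_1)
lemma mincond: "u \<bullet> F z = 0 \<Longrightarrow> u \<bullet> dx F z = 0 \<Longrightarrow> u \<bullet> dy F z = 0 \<Longrightarrow> lap F z \<bullet> u = 0"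
  using Fmin unfolding isometric_minimal_immersion_def TanS3_def by blast

lemma sFx: "smooth (dx F)" and sFy: "smooth (dy F)" and sFxx: "smooth (dx (dx F))" and sFxy: "smooth (dy (dx F))"
  and sFyy: "smooth (dy (dy F))" and sFyx: "smooth (dx (dy F))"
  using sF by (auto intro: smooth_dx smooth_dy)

lemma dF [simp]: "F differentiable (at z)" "dx F differentiable (at z)" "dy F differentiable (at z)"
  "dx (dx F) differentiable (at z)" "dy (dx F) differentiable (at z)" "dy (dy F) differentiable (at z)"
  "dx (dy F) differentiable (at z)" "v differentiable (at z)"
  using sF sFx sFy sFxx sFxy sFyy sFyx v_smooth by (auto intro: smooth_diff)

lemma Fyx: "dx (dy F) z = dy (dx F) z" using clairaut[OF sF] by simp

lemma diff_id: assumes "\<And>w. P w = Q w" shows "dx P z = dx Q z" "dy P z = dy Q z"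
proof -
  have "P = Q" using assms by auto
  then show "dx P z = dx Q z" "dy P z = dy Q z" by auto
qed

lemma FFx: "F z \<bullet> dx F z = 0" "F z \<bullet> dy F z = 0"
proof -
  have "dx (\<lambda>w. F w \<bullet> F w) z = dx (\<lambda>w. 1) z" "dy (\<lambda>w. F w \<bullet> F w) z = dy (\<lambda>w. 1) z"
    by (rule diff_id, rule FF)+
  then show "F z \<bullet> dx F z = 0" "F z \<bullet> dy F z = 0" by (simp_all add: inner_commute)
qed

definition N where "N z = exp (-2 * v z) *\<^sub>R cof (dx F z) (dy F z) (F z)"

lemma cof_norm: "cof (dx F z) (dy F z) (F z) \<bullet> cof (dx F z) (dy F z) (F z) = exp (2 * v z) * exp (2 * v z)"
  unfolding gram3 using iso FF FFx by (simp add: inner_commute)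

lemma expm: "exp (-2 * v z) * exp (2 * v z) = 1" "exp (- (2 * v z)) * exp (2 * v z) = 1"
   "exp (2 * v z) * exp (- (2 * v z)) = 1"
  by (simp_all add: exp_add[symmetric])

lemma NN: "N z \<bullet> N z = 1"
proof -
  have "N z \<bullet> N z = (exp (-2 * v z) * exp (2 * v z)) * (exp (-2 * v z) * exp (2 * v z))"
    unfolding N_def using cof_norm by (simp add: algebra_simps)
  then show ?thesis by (simp add: expm)
qed
lemma NF: "N z \<bullet> F z = 0" "N z \<bullet> dx F z = 0" "N z \<bullet> dy F z = 0"
  unfolding N_def by (simp_all add: cof_orth)

lemma normal_eq: "normal_S3 F z = N z"
  unfolding normal_S3_def
proof (rule the_equality)
  have "det (vector [dx F z, dy F z, F z, N z] :: real^4^4) = exp (2 * v z)"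
  proof -
    have "det (vector [dx F z, dy F z, F z, N z] :: real^4^4) = cof (dx F z) (dy F z) (F z) \<bullet> N z"
      by (simp add: cof_inner D4_def)
    also have "\<dots> = exp (-2 * v z) * (exp (2 * v z) * exp (2 * v z))"
      unfolding N_def using cof_norm by simp
    also have "\<dots> = exp (2 * v z)" using expm by (simp add: algebra_simps)
    finally show ?thesis .
  qed
  then show "norm (N z) = 1 \<and> N z \<bullet> dx F z = 0 \<and> N z \<bullet> dy F z = 0 \<and> N z \<bullet> F z = 0 \<and>
     0 < det (vector [dx F z, dy F z, F z, N z] :: real^4^4)"
    using NN NF by (simp add: norm_eq_1)
next
  fix n :: "real^4"
  assume n: "norm n = 1 \<and> n \<bullet> dx F z = 0 \<and> n \<bullet> dy F z = 0 \<and> n \<bullet> F z = 0 \<and>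
     0 < det (vector [dx F z, dy F z, F z, n] :: real^4^4)"
  define k where "k = cof (dx F z) (dy F z) (F z)"
  have kk: "k \<bullet> k = exp (2 * v z) * exp (2 * v z)" unfolding k_def by (rule cof_norm)
  have pos: "dx F z \<bullet> dx F z > 0" "dy F z \<bullet> dy F z > 0" "F z \<bullet> F z > 0" using iso FF by auto
  have o: "dx F z \<bullet> dy F z = 0" "dx F z \<bullet> F z = 0" "dy F z \<bullet> F z = 0" using iso FFx by (simp_all add: inner_commute)
  have nk: "n = (n \<bullet> k / (k \<bullet> k)) *\<^sub>R k"
    using parseval[OF o pos, of n] n unfolding k_def by (simp add: inner_commute)
  have "n \<bullet> k = k \<bullet> n" by (rule inner_commute)
  then have nkp: "n \<bullet> k > 0" using n unfolding k_def by (simp add: cof_inner D4_def)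
  have "1 = n \<bullet> n" using n by (simp add: norm_eq_1)
  also have "\<dots> = (n \<bullet> k)^2 / (k \<bullet> k)"
    by (subst (1 2) nk) (simp add: power2_eq_square)
  finally have "(n \<bullet> k)^2 = (exp (2 * v z))^2" using kk by (simp add: power2_eq_square field_simps)
  then have "n \<bullet> k = exp (2 * v z)" using nkp by (simp add: power2_eq_iff_nonneg)
  then show "n = N z" using nk kk unfolding N_def k_def by (simp add: exp_minus_inverse field_simps)
qed


lemma sN: "smooth N"
proof -
  have "N = (\<lambda>z. exp (-2 * v z) *\<^sub>R cof (dx F z) (dy F z) (F z))" by (simp add: fun_eq_iff N_def)
  then show ?thesis
    by (simp only:) (rule smooth_bil[OF bounded_bilinear_scaleR smooth_expc[OF v_smooth] smooth_cof[OF sFx sFy sF]])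
qed

lemma dN [simp]: "N differentiable (at z)" using smooth_diff[OF sN] .

lemma table1:
  "F z \<bullet> dx (dx F) z = - exp (2 * v z)" "F z \<bullet> dy (dx F) z = 0" "F z \<bullet> dy (dy F) z = - exp (2 * v z)"
  "dx F z \<bullet> dx (dx F) z = dx v z * exp (2 * v z)" "dx F z \<bullet> dy (dx F) z = dy v z * exp (2 * v z)"
  "dy F z \<bullet> dy (dx F) z = dx v z * exp (2 * v z)" "dy F z \<bullet> dy (dy F) z = dy v z * exp (2 * v z)"
  "dy F z \<bullet> dx (dx F) z = - dy v z * exp (2 * v z)" "dx F z \<bullet> dy (dy F) z = - dx v z * exp (2 * v z)"
proof -
  have a: "dx (\<lambda>w. F w \<bullet> dx F w) z = dx (\<lambda>w. 0) z" "dy (\<lambda>w. F w \<bullet> dx F w) z = dy (\<lambda>w. 0) z"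
    "dy (\<lambda>w. F w \<bullet> dy F w) z = dy (\<lambda>w. 0) z"
    by (rule diff_id, rule FFx)+
  then have "dx F z \<bullet> dx F z + F z \<bullet> dx (dx F) z = 0" "dy F z \<bullet> dx F z + F z \<bullet> dy (dx F) z = 0"
      "dy F z \<bullet> dy F z + F z \<bullet> dy (dy F) z = 0" by simp_all
  then show "F z \<bullet> dx (dx F) z = - exp (2 * v z)" "F z \<bullet> dy (dx F) z = 0" "F z \<bullet> dy (dy F) z = - exp (2 * v z)"
    using iso by (simp_all add: inner_commute)
  have b: "dx (\<lambda>w. dx F w \<bullet> dx F w) z = dx (\<lambda>w. exp (2 * v w)) z" "dy (\<lambda>w. dx F w \<bullet> dx F w) z = dy (\<lambda>w. exp (2 * v w)) z"
     "dx (\<lambda>w. dy F w \<bullet> dy F w) z = dx (\<lambda>w. exp (2 * v w)) z" "dy (\<lambda>w. dy F w \<bullet> dy F w) z = dy (\<lambda>w. exp (2 * v w)) z"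
    by (rule diff_id, rule iso)+
  then show c: "dx F z \<bullet> dx (dx F) z = dx v z * exp (2 * v z)" "dx F z \<bullet> dy (dx F) z = dy v z * exp (2 * v z)"
    "dy F z \<bullet> dy (dx F) z = dx v z * exp (2 * v z)" "dy F z \<bullet> dy (dy F) z = dy v z * exp (2 * v z)"
    by (simp_all add: inner_commute Fyx)
  have d: "dx (\<lambda>w. dx F w \<bullet> dy F w) z = dx (\<lambda>w. 0) z" "dy (\<lambda>w. dx F w \<bullet> dy F w) z = dy (\<lambda>w. 0) z"
    by (rule diff_id, rule iso)+
  then show "dy F z \<bullet> dx (dx F) z = - dy v z * exp (2 * v z)" "dx F z \<bullet> dy (dy F) z = - dx v z * exp (2 * v z)"
    using c by (simp_all add: inner_commute Fyx)
qed


lemma table2: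
  "dx N z \<bullet> N z = 0" "dy N z \<bullet> N z = 0" "dx N z \<bullet> F z = 0" "dy N z \<bullet> F z = 0"
  "dx N z \<bullet> dx F z = - (N z \<bullet> dx (dx F) z)" "dy N z \<bullet> dx F z = - (N z \<bullet> dy (dx F) z)"
  "dx N z \<bullet> dy F z = - (N z \<bullet> dy (dx F) z)" "dy N z \<bullet> dy F z = - (N z \<bullet> dy (dy F) z)"
proof -
  have "dx (\<lambda>w. N w \<bullet> N w) z = dx (\<lambda>w. 1) z" "dy (\<lambda>w. N w \<bullet> N w) z = dy (\<lambda>w. 1) z"
    "dx (\<lambda>w. N w \<bullet> F w) z = dx (\<lambda>w. 0) z" "dy (\<lambda>w. N w \<bullet> F w) z = dy (\<lambda>w. 0) z"
    "dx (\<lambda>w. N w \<bullet> dx F w) z = dx (\<lambda>w. 0) z" "dy (\<lambda>w. N w \<bullet> dx F w) z = dy (\<lambda>w. 0) z"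
    "dx (\<lambda>w. N w \<bullet> dy F w) z = dx (\<lambda>w. 0) z" "dy (\<lambda>w. N w \<bullet> dy F w) z = dy (\<lambda>w. 0) z"
    by (rule diff_id, rule NN NF)+
  then have "dx N z \<bullet> N z + N z \<bullet> dx N z = 0" "dy N z \<bullet> N z + N z \<bullet> dy N z = 0"
    "dx N z \<bullet> F z + N z \<bullet> dx F z = 0" "dy N z \<bullet> F z + N z \<bullet> dy F z = 0"
    "dx N z \<bullet> dx F z + N z \<bullet> dx (dx F) z = 0" "dy N z \<bullet> dx F z + N z \<bullet> dy (dx F) z = 0"
    "dx N z \<bullet> dy F z + N z \<bullet> dx (dy F) z = 0" "dy N z \<bullet> dy F z + N z \<bullet> dy (dy F) z = 0"
    by simp_all
  then show "dx N z \<bullet> N z = 0" "dy N z \<bullet> N z = 0" "dx N z \<bullet> F z = 0" "dy N z \<bullet> F z = 0"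
  "dx N z \<bullet> dx F z = - (N z \<bullet> dx (dx F) z)" "dy N z \<bullet> dx F z = - (N z \<bullet> dy (dx F) z)"
  "dx N z \<bullet> dy F z = - (N z \<bullet> dy (dx F) z)" "dy N z \<bullet> dy F z = - (N z \<bullet> dy (dy F) z)"
    using NF by (simp_all add: inner_commute Fyx)
qed

lemma minN: "N z \<bullet> dy (dy F) z = - (N z \<bullet> dx (dx F) z)"
proof -
  have "lap F z \<bullet> N z = 0" by (rule mincond) (simp_all add: NF)
  then have "dx (dx F) z \<bullet> N z + dy (dy F) z \<bullet> N z = 0" unfolding lap_def by (simp add: inner_add_left)
  then show ?thesis by (simp add: inner_commute)
qed

lemma hopf_ab: "N z \<bullet> dx (dx F) z = sin t" "N z \<bullet> dy (dx F) z = cos t"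
proof -
  have nf: "normal_S3 F = N" by (rule ext, rule normal_eq)
  have h: "hopf_S3 F z = \<i> / 2 * exp (\<i> * complex_of_real t)" using Fhopf by blast
  have "Re (hopf_S3 F z) = - (N z \<bullet> dx (dx F) z) / 2" "Im (hopf_S3 F z) = (N z \<bullet> dy (dx F) z) / 2"
    unfolding hopf_S3_def nf dz_def cbil_def using table2[of z] minN[of z]
    by (simp_all add: inner_commute)
  moreover have "Re (\<i> / 2 * exp (\<i> * complex_of_real t)) = - sin t / 2"
    "Im (\<i> / 2 * exp (\<i> * complex_of_real t)) = cos t / 2"
    by (simp_all add: Re_exp Im_exp)
  ultimately show "N z \<bullet> dx (dx F) z = sin t" "N z \<bullet> dy (dx F) z = cos t" using h by auto
qed


lemma kN: "cof (dx F z) (dy F z) (F z) = exp (2 * v z) *\<^sub>R N z"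
  unfolding N_def using expm by (simp add: scaleR_scaleR)

lemma frame_expand: "w = (w \<bullet> dx F z / exp (2 * v z)) *\<^sub>R dx F z + (w \<bullet> dy F z / exp (2 * v z)) *\<^sub>R dy F z
   + (w \<bullet> F z) *\<^sub>R F z + (w \<bullet> N z) *\<^sub>R N z"
proof -
  have pos: "dx F z \<bullet> dx F z > 0" "dy F z \<bullet> dy F z > 0" "F z \<bullet> F z > 0" using iso FF by auto
  have o: "dx F z \<bullet> dy F z = 0" "dx F z \<bullet> F z = 0" "dy F z \<bullet> F z = 0" using iso FFx by (simp_all add: inner_commute)
  have "w = (w \<bullet> dx F z / (dx F z \<bullet> dx F z)) *\<^sub>R dx F z + (w \<bullet> dy F z / (dy F z \<bullet> dy F z)) *\<^sub>R dy F z
           + (w \<bullet> F z / (F z \<bullet> F z)) *\<^sub>R F z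
           + (w \<bullet> cof (dx F z) (dy F z) (F z) / (cof (dx F z) (dy F z) (F z) \<bullet> cof (dx F z) (dy F z) (F z))) *\<^sub>R cof (dx F z) (dy F z) (F z)"
    by (rule parseval[OF o pos])
  also have "(w \<bullet> cof (dx F z) (dy F z) (F z) / (cof (dx F z) (dy F z) (F z) \<bullet> cof (dx F z) (dy F z) (F z))) *\<^sub>R cof (dx F z) (dy F z) (F z)
     = (w \<bullet> N z) *\<^sub>R N z"
    unfolding kN using NN by (simp add: scaleR_scaleR)
  finally show ?thesis using iso FF NN by simp
qed

lemma frame:
  "dx (dx F) z = dx v z *\<^sub>R dx F z + (- dy v z) *\<^sub>R dy F z + (- exp (2 * v z)) *\<^sub>R F z + sin t *\<^sub>R N z"
  "dy (dx F) z = dy v z *\<^sub>R dx F z + dx v z *\<^sub>R dy F z + cos t *\<^sub>R N z"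
  "dy (dy F) z = (- dx v z) *\<^sub>R dx F z + dy v z *\<^sub>R dy F z + (- exp (2 * v z)) *\<^sub>R F z + (- sin t) *\<^sub>R N z"
  "dx N z = (- sin t / exp (2 * v z)) *\<^sub>R dx F z + (- cos t / exp (2 * v z)) *\<^sub>R dy F z"
  "dy N z = (- cos t / exp (2 * v z)) *\<^sub>R dx F z + (sin t / exp (2 * v z)) *\<^sub>R dy F z"
proof -
  note T = table1[of z] table2[of z] hopf_ab[of z] minN[of z] Fyx[of z]
  show "dx (dx F) z = dx v z *\<^sub>R dx F z + (- dy v z) *\<^sub>R dy F z + (- exp (2 * v z)) *\<^sub>R F z + sin t *\<^sub>R N z"
  proof -
    have c: "dx (dx F) z \<bullet> dx F z = dx v z * exp (2 * v z)" "dx (dx F) z \<bullet> dy F z = - dy v z * exp (2 * v z)" "dx (dx F) z \<bullet> F z = - exp (2 * v z)" "dx (dx F) z \<bullet> N z = sin t"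
      using T by (simp_all add: inner_commute)
    show ?thesis by (subst frame_expand[of "dx (dx F) z" z], simp only: c, simp)
  qed
  show "dy (dx F) z = dy v z *\<^sub>R dx F z + dx v z *\<^sub>R dy F z + cos t *\<^sub>R N z"
  proof -
    have c: "dy (dx F) z \<bullet> dx F z = dy v z * exp (2 * v z)" "dy (dx F) z \<bullet> dy F z = dx v z * exp (2 * v z)" "dy (dx F) z \<bullet> F z = 0" "dy (dx F) z \<bullet> N z = cos t"
      using T by (simp_all add: inner_commute)
    show ?thesis by (subst frame_expand[of "dy (dx F) z" z], simp only: c, simp)
  qed
  show "dy (dy F) z = (- dx v z) *\<^sub>R dx F z + dy v z *\<^sub>R dy F z + (- exp (2 * v z)) *\<^sub>R F z + (- sin t) *\<^sub>R N z"
  proof -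
    have c: "dy (dy F) z \<bullet> dx F z = - dx v z * exp (2 * v z)" "dy (dy F) z \<bullet> dy F z = dy v z * exp (2 * v z)" "dy (dy F) z \<bullet> F z = - exp (2 * v z)" "dy (dy F) z \<bullet> N z = - sin t"
      using T by (simp_all add: inner_commute)
    show ?thesis by (subst frame_expand[of "dy (dy F) z" z], simp only: c, simp)
  qed
  show "dx N z = (- sin t / exp (2 * v z)) *\<^sub>R dx F z + (- cos t / exp (2 * v z)) *\<^sub>R dy F z"
  proof -
    have c: "dx N z \<bullet> dx F z = - sin t" "dx N z \<bullet> dy F z = - cos t" "dx N z \<bullet> F z = 0" "dx N z \<bullet> N z = 0"
      using T by (simp_all add: inner_commute)
    show ?thesis by (subst frame_expand[of "dx N z" z], simp only: c, simp)
  qed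
  show "dy N z = (- cos t / exp (2 * v z)) *\<^sub>R dx F z + (sin t / exp (2 * v z)) *\<^sub>R dy F z"
  proof -
    have c: "dy N z \<bullet> dx F z = - cos t" "dy N z \<bullet> dy F z = sin t" "dy N z \<bullet> F z = 0" "dy N z \<bullet> N z = 0"
      using T by (simp_all add: inner_commute)
    show ?thesis by (subst frame_expand[of "dy N z" z], simp only: c, simp)
  qed
qed

end

context surf begin

lemma frameN:
  "dx N z = (- sin t * exp (- (2 * v z))) *\<^sub>R dx F z + (- cos t * exp (- (2 * v z))) *\<^sub>R dy F z"
  "dy N z = (- cos t * exp (- (2 * v z))) *\<^sub>R dx F z + (sin t * exp (- (2 * v z))) *\<^sub>R dy F z"
  using frame(4,5)[of z] by (simp_all add: exp_minus field_simps)

definition NU where "NU z = (1 / sqrt 2) *\<^sub>R (exp (-2 * v z) *\<^sub>R wedge (dx F z) (dy F z) + wedge (F z) (N z))"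

definition GX where "GX z = (1 / sqrt 2) *\<^sub>R (wedge (dx F z) (N z) - wedge (F z) (dy F z) + exp (-2 * v z) *\<^sub>R
   (sin t *\<^sub>R wedge (N z) (dy F z) + cos t *\<^sub>R wedge (dx F z) (N z) - sin t *\<^sub>R wedge (F z) (dx F z) - cos t *\<^sub>R wedge (F z) (dy F z)))"

definition GY where "GY z = (1 / sqrt 2) *\<^sub>R (wedge (F z) (dx F z) + wedge (dy F z) (N z) + exp (-2 * v z) *\<^sub>R
   (cos t *\<^sub>R wedge (N z) (dy F z) - sin t *\<^sub>R wedge (dx F z) (N z) - cos t *\<^sub>R wedge (F z) (dx F z) + sin t *\<^sub>R wedge (F z) (dy F z)))"

lemma dx_diff' [simp]: "P differentiable (at z) \<Longrightarrow> Q differentiable (at z) \<Longrightarrow>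
  dx (\<lambda>w. P w - Q w) z = dx P z - dx Q z"
proof -
  assume p: "P differentiable (at z)" and q: "Q differentiable (at z)"
  have "dx (\<lambda>w. P w + (-1) *\<^sub>R Q w) z = dx P z + (-1) *\<^sub>R dx Q z"
    using p q by (simp only: dx_add' dx_scaleC diff_scaleC)
  then show ?thesis by simp
qed
lemma dy_diff' [simp]: "P differentiable (at z) \<Longrightarrow> Q differentiable (at z) \<Longrightarrow>
  dy (\<lambda>w. P w - Q w) z = dy P z - dy Q z"
proof -
  assume p: "P differentiable (at z)" and q: "Q differentiable (at z)"
  have "dy (\<lambda>w. P w + (-1) *\<^sub>R Q w) z = dy P z + (-1) *\<^sub>R dy Q z"
    using p q by (simp only: dy_add' dy_scaleC diff_scaleC)
  then show ?thesis by simp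
qed
lemma diff_diff [simp]: "P differentiable (at z) \<Longrightarrow> Q differentiable (at z) \<Longrightarrow> (\<lambda>w. P w - Q w) differentiable (at z)"
  by (rule differentiable_diff)

lemma alg_GX:
  fixes P X Y M Xx Xy Mx :: "real^4"
  assumes "Xx = vx *\<^sub>R X + (- vy) *\<^sub>R Y + (- E) *\<^sub>R P + s *\<^sub>R M"
    "Xy = vy *\<^sub>R X + vx *\<^sub>R Y + c *\<^sub>R M"
    "Mx = (- s * e) *\<^sub>R X + (- c * e) *\<^sub>R Y" "e * E = 1"
  shows "r *\<^sub>R ((e * (-2 * vx)) *\<^sub>R wedge X Y + e *\<^sub>R (wedge Xx Y + wedge X Xy) + (wedge X M + wedge P Mx))
    = r *\<^sub>R (wedge X M - wedge P Y + e *\<^sub>R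
   (s *\<^sub>R wedge M Y + c *\<^sub>R wedge X M - s *\<^sub>R wedge P X - c *\<^sub>R wedge P Y))"
  unfolding assms(1-3) vec6_eq using assms(4) by (simp add: algebra_simps; algebra)

lemma alg_GY:
  fixes P X Y M Xy Yy My :: "real^4"
  assumes "Yy = (- vx) *\<^sub>R X + vy *\<^sub>R Y + (- E) *\<^sub>R P + (- s) *\<^sub>R M"
    "Xy = vy *\<^sub>R X + vx *\<^sub>R Y + c *\<^sub>R M"
    "My = (- c * e) *\<^sub>R X + (s * e) *\<^sub>R Y" "e * E = 1"
  shows "r *\<^sub>R ((e * (-2 * vy)) *\<^sub>R wedge X Y + e *\<^sub>R (wedge Xy Y + wedge X Yy) + (wedge Y M + wedge P My))
    = r *\<^sub>R (wedge P X + wedge Y M + e *\<^sub>R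
   (c *\<^sub>R wedge M Y - s *\<^sub>R wedge X M - c *\<^sub>R wedge P X + s *\<^sub>R wedge P Y))"
  unfolding assms(1-3) vec6_eq using assms(4) by (simp add: algebra_simps; algebra)

lemma NU_fun: "NU = (\<lambda>z. (1 / sqrt 2) *\<^sub>R (exp (-2 * v z) *\<^sub>R wedge (dx F z) (dy F z) + wedge (F z) (N z)))"
  by (simp add: fun_eq_iff NU_def)

lemma expm2: "exp (-2 * v z) * exp (2 * v z) = 1" by (rule expm(1))

lemma frameN':
  "dx N z = (- sin t * exp (-2 * v z)) *\<^sub>R dx F z + (- cos t * exp (-2 * v z)) *\<^sub>R dy F z"
  "dy N z = (- cos t * exp (-2 * v z)) *\<^sub>R dx F z + (sin t * exp (-2 * v z)) *\<^sub>R dy F z"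
  using frameN[of z] by simp_all

lemma dNU: "dx NU z = GX z"
proof -
  have "dx NU z = (1 / sqrt 2) *\<^sub>R ((exp (-2 * v z) * (-2 * dx v z)) *\<^sub>R wedge (dx F z) (dy F z) +
     exp (-2 * v z) *\<^sub>R (wedge (dx (dx F) z) (dy F z) + wedge (dx F z) (dx (dy F) z)) +
     (wedge (dx F z) (N z) + wedge (F z) (dx N z)))"
    unfolding NU_fun
    by (simp only: dx_scaleC dx_add' dx_scaleR dx_wedge dx_expc diff_wedge diff_scaleR diff_scaleC diff_add diff_expc dF dN)
  also have "\<dots> = GX z"
    unfolding GX_def Fyx
    by (rule alg_GX[OF frame(1) frame(2) frameN'(1) expm2])
  finally show ?thesis .
qed

lemma dyNU: "dy NU z = GY z"
proof -
  have "dy NU z = (1 / sqrt 2) *\<^sub>R ((exp (-2 * v z) * (-2 * dy v z)) *\<^sub>R wedge (dx F z) (dy F z) +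
     exp (-2 * v z) *\<^sub>R (wedge (dy (dx F) z) (dy F z) + wedge (dx F z) (dy (dy F) z)) +
     (wedge (dy F z) (N z) + wedge (F z) (dy N z)))"
    unfolding NU_fun
    by (simp only: dy_scaleC dy_add' dy_scaleR dy_wedge dy_expc diff_wedge diff_scaleR diff_scaleC diff_add diff_expc dF dN)
  also have "\<dots> = GY z"
    unfolding GY_def
    by (rule alg_GY[OF frame(3) frame(2) frameN'(2) expm2])
  finally show ?thesis .
qed


lemma GX_fun: "GX = (\<lambda>z. (1 / sqrt 2) *\<^sub>R (wedge (dx F z) (N z) - wedge (F z) (dy F z) + exp (-2 * v z) *\<^sub>R
   (sin t *\<^sub>R wedge (N z) (dy F z) + cos t *\<^sub>R wedge (dx F z) (N z) - sin t *\<^sub>R wedge (F z) (dx F z) - cos t *\<^sub>R wedge (F z) (dy F z))))"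
  by (simp add: fun_eq_iff GX_def)
lemma GY_fun: "GY = (\<lambda>z. (1 / sqrt 2) *\<^sub>R (wedge (F z) (dx F z) + wedge (dy F z) (N z) + exp (-2 * v z) *\<^sub>R
   (cos t *\<^sub>R wedge (N z) (dy F z) - sin t *\<^sub>R wedge (dx F z) (N z) - cos t *\<^sub>R wedge (F z) (dx F z) + sin t *\<^sub>R wedge (F z) (dy F z))))"
  by (simp add: fun_eq_iff GY_def)

lemma lapNU: "dx GX z + dy GY z = (- 2 * (exp (2 * v z) + exp (-2 * v z))) *\<^sub>R NU z"
proof -
  obtain e E r where eE: "exp (-2 * v z) = e" "exp (2 * v z) = E" "1 / sqrt 2 = r" by blast
  have h1: "e * E = 1" using expm2[of z] eE by simp
  have h2: "sin t * sin t + cos t * cos t = 1" using sin_cos_squared_add[of t] by (simp add: power2_eq_square)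
  show ?thesis
    unfolding GX_fun GY_fun
    apply (simp only: dx_scaleC dx_add' dx_diff' dx_scaleR dx_wedge dx_expc dy_scaleC dy_add' dy_diff' dy_scaleR dy_wedge dy_expc
       diff_wedge diff_scaleR diff_scaleC diff_add diff_diff diff_expc dF dN)
    apply (simp only: Fyx frame(1-3) frameN' NU_def eE)
    apply (simp only: vec6_eq vector_add_component vector_minus_component vector_scaleR_component wedge_comp diff_minus_eq_add real_scaleR_def)
    apply (insert h1 h2)
    apply (intro conjI)
         apply algebra+
    done
qed


lemma tab: "F z \<bullet> F z = 1" "dx F z \<bullet> dx F z = exp (2 * v z)" "dy F z \<bullet> dy F z = exp (2 * v z)" "N z \<bullet> N z = 1"
  "F z \<bullet> dx F z = 0" "F z \<bullet> dy F z = 0" "N z \<bullet> F z = 0" "dx F z \<bullet> dy F z = 0" "N z \<bullet> dx F z = 0" "N z \<bullet> dy F z = 0"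
  "dx F z \<bullet> F z = 0" "dy F z \<bullet> F z = 0" "F z \<bullet> N z = 0" "dy F z \<bullet> dx F z = 0" "dx F z \<bullet> N z = 0" "dy F z \<bullet> N z = 0"
  using FF iso FFx NN NF by (simp_all add: inner_commute)

lemmas inner_exp = inner_add_left inner_add_right inner_diff_left inner_diff_right inner_scaleR_left inner_scaleR_right inner_wedge

lemma r2: "(1 / sqrt 2) * (1 / sqrt (2::real)) = 1/2"
  by (simp add: real_sqrt_mult[symmetric])

lemma GXX: "GX z \<bullet> GX z = exp (2 * v z) + 2 * cos t + exp (-2 * v z)"
proof -
  obtain e E r where eE: "exp (-2 * v z) = e" "exp (2 * v z) = E" "1 / sqrt 2 = r" by blast
  have h1: "e * E = 1" using expm2[of z] eE by simp
  have h2: "sin t * sin t + cos t * cos t = 1" using sin_cos_squared_add[of t] by (simp add: power2_eq_square)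
  have h3: "r * r = 1/2" using r2 eE by simp
  show ?thesis
    unfolding GX_def
    apply (simp only: inner_exp tab eE)
    apply (insert h1 h2 h3)
    apply algebra
    done
qed

lemma GYY: "GY z \<bullet> GY z = exp (2 * v z) - 2 * cos t + exp (-2 * v z)"
proof -
  obtain e E r where eE: "exp (-2 * v z) = e" "exp (2 * v z) = E" "1 / sqrt 2 = r" by blast
  have h1: "e * E = 1" using expm2[of z] eE by simp
  have h2: "sin t * sin t + cos t * cos t = 1" using sin_cos_squared_add[of t] by (simp add: power2_eq_square)
  have h3: "r * r = 1/2" using r2 eE by simp
  show ?thesis
    unfolding GY_def
    apply (simp only: inner_exp tab eE)
    apply (insert h1 h2 h3)
    apply algebra
    done
qed

lemma GXY: "GX z \<bullet> GY z = - 2 * sin t"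
proof -
  obtain e E r where eE: "exp (-2 * v z) = e" "exp (2 * v z) = E" "1 / sqrt 2 = r" by blast
  have h1: "e * E = 1" using expm2[of z] eE by simp
  have h2: "sin t * sin t + cos t * cos t = 1" using sin_cos_squared_add[of t] by (simp add: power2_eq_square)
  have h3: "r * r = 1/2" using r2 eE by simp
  show ?thesis
    unfolding GX_def GY_def
    apply (simp only: inner_exp tab eE)
    apply (insert h1 h2 h3)
    apply algebra
    done
qed

lemma NUNU: "NU z \<bullet> NU z = 1"
proof -
  obtain e E r where eE: "exp (-2 * v z) = e" "exp (2 * v z) = E" "1 / sqrt 2 = r" by blast
  have h1: "e * E = 1" using expm2[of z] eE by simp
  have h3: "r * r = 1/2" using r2 eE by simp
  show ?thesis
    unfolding NU_def
    apply (simp only: inner_exp tab eE)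
    apply (insert h1 h3)
    apply algebra
    done
qed


lemma D4N: "D4 (dx F z) (dy F z) (F z) (N z) = exp (2 * v z)"
proof -
  have "D4 (dx F z) (dy F z) (F z) (N z) = cof (dx F z) (dy F z) (F z) \<bullet> N z" by (simp add: cof_inner)
  also have "\<dots> = exp (2 * v z)" unfolding kN using NN by simp
  finally show ?thesis .
qed

lemma hodge_diff: "hodge (u - w) = hodge u - hodge w" by (simp add: vec6_eq)

lemma hodgeXY: "hodge (wedge (dx F z) (dy F z)) = exp (2 * v z) *\<^sub>R wedge (F z) (N z)"
proof -
  define d where "d = hodge (wedge (dx F z) (dy F z)) - exp (2 * v z) *\<^sub>R wedge (F z) (N z)"
  have "d \<bullet> d = hodge (wedge (dx F z) (dy F z)) \<bullet> hodge (wedge (dx F z) (dy F z))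
     - 2 * exp (2 * v z) * (hodge (wedge (dx F z) (dy F z)) \<bullet> wedge (F z) (N z))
     + exp (2 * v z) * exp (2 * v z) * (wedge (F z) (N z) \<bullet> wedge (F z) (N z))"
    unfolding d_def by (simp add: inner_diff_left inner_diff_right inner_commute algebra_simps)
  also have "\<dots> = 0"
    unfolding inner_hodge D4_wedge[symmetric] D4N using tab[of z] by (simp add: inner_wedge)
  finally have "d = 0" by simp
  then show ?thesis unfolding d_def by simp
qed

lemma hodgeFN: "hodge (wedge (F z) (N z)) = exp (-2 * v z) *\<^sub>R wedge (dx F z) (dy F z)"
proof -
  have "wedge (dx F z) (dy F z) = exp (2 * v z) *\<^sub>R hodge (wedge (F z) (N z))"
    using arg_cong[OF hodgeXY[of z], of hodge] by (simp add: hodge_hodge hodge_scaleR)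
  then have "exp (-2 * v z) *\<^sub>R wedge (dx F z) (dy F z) = (exp (-2 * v z) * exp (2 * v z)) *\<^sub>R hodge (wedge (F z) (N z))"
    by simp
  then show ?thesis using expm2[of z] by simp
qed

lemma hodgeNU: "hodge (NU z) = NU z"
  unfolding NU_def hodge_scaleR hodge_add hodgeXY hodgeFN using expm2[of z]
  by (simp add: algebra_simps)

lemma NU_S2: "NU z \<in> S2plus"
  unfolding S2plus_def Lambda2plus_def using hodgeNU NUNU by (simp add: norm_eq_1)

end

lemma smooth_id: "smooth (\<lambda>z::complex. z)"
proof -
  have "Sm n (\<lambda>z::complex. z)" for n
  proof (cases n)
    case 0 show ?thesis unfolding 0 by (rule Sm_0I) simp
  next
    case (Suc m)
    have "dx (\<lambda>z. z) = (\<lambda>z. 1)" "dy (\<lambda>z. z) = (\<lambda>z. \<i>)"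
      by (auto simp: fun_eq_iff intro!: dx_at dy_at)
    then show ?thesis unfolding Suc by (intro Sm_SucI) (simp_all add: Sm_const)
  qed
  then show ?thesis unfolding smooth_Sm by blast
qed

lemma smooth_pair: "smooth f \<Longrightarrow> smooth g \<Longrightarrow> smooth (\<lambda>z. (f z, g z))"
proof -
  assume f: "smooth f" and g: "smooth g"
  have "smooth (\<lambda>z. (f z, 0) + (0, g z))"
    by (rule smooth_add; rule smooth_lin[OF bounded_linear_Pair]; (rule f g bounded_linear_ident bounded_linear_zero)?)
  then show ?thesis by simp
qed

lemma dx_pair: assumes f: "f differentiable (at z)" and g: "g differentiable (at z)"
  shows "dx (\<lambda>w. (f w, g w)) z = (dx f z, dx g z)"
proof -
  have "((\<lambda>w. (f w, g w)) has_derivative (\<lambda>h. (Re h *\<^sub>R dx f z + Im h *\<^sub>R dy f z, Re h *\<^sub>R dx g z + Im h *\<^sub>R dy g z))) (at z)"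
    by (rule has_derivative_Pair[OF deriv_repr[OF f] deriv_repr[OF g]])
  from dx_at[OF this] show ?thesis by simp
qed
lemma dy_pair: assumes f: "f differentiable (at z)" and g: "g differentiable (at z)"
  shows "dy (\<lambda>w. (f w, g w)) z = (dy f z, dy g z)"
proof -
  have "((\<lambda>w. (f w, g w)) has_derivative (\<lambda>h. (Re h *\<^sub>R dx f z + Im h *\<^sub>R dy f z, Re h *\<^sub>R dx g z + Im h *\<^sub>R dy g z))) (at z)"
    by (rule has_derivative_Pair[OF deriv_repr[OF f] deriv_repr[OF g]])
  from dy_at[OF this] show ?thesis by simp
qed

context surf begin

lemma nu_eq: "nu_plus F z = NU z"
proof -
  have n: "norm (dx F z) = exp (v z)" "norm (dy F z) = exp (v z)"
  proof -
    have s: "sqrt (exp (2 * v z)) = exp (v z)" unfolding exp_double by simp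
    show "norm (dx F z) = exp (v z)" "norm (dy F z) = exp (v z)"
      unfolding norm_eq_sqrt_inner iso s by simp_all
  qed
  have "(1 / exp (v z)) * (1 / exp (v z)) = exp (-2 * v z)"
    by (simp add: exp_minus[symmetric] exp_add[symmetric] field_simps)
  then show ?thesis unfolding nu_plus_def NU_def n normal_eq
    by (simp add: wedge_scaleR_left wedge_scaleR_right)
qed

lemma sNU: "smooth NU"
  unfolding NU_fun
  apply (rule smooth_lin[OF bounded_linear_scaleR_right])
  apply (rule smooth_add)
   apply (rule smooth_bil[OF bounded_bilinear_scaleR smooth_expc[OF v_smooth]])
   apply (rule smooth_bil[OF bounded_bilinear_wedge sFx sFy])
  apply (rule smooth_bil[OF bounded_bilinear_wedge sF sN])
  done

definition c2 where "c2 = exp (\<i> * complex_of_real t / 2)"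
definition P2 where "P2 z = 2 * Im (z * c2)"

lemma bl_P2: "bounded_linear P2"
proof -
  have "P2 = (\<lambda>z. 2 * (Re z * Im c2 + Im z * Re c2))" by (simp add: fun_eq_iff P2_def)
  then show ?thesis by (auto intro!: bounded_linear_intros simp: bounded_linear_Re bounded_linear_Im)
qed

lemma dP2: "dx P2 z = 2 * sin (t / 2)" "dy P2 z = 2 * cos (t / 2)" "P2 differentiable (at z)"
proof -
  have d: "(P2 has_derivative P2) (at z)" by (rule bounded_linear_imp_has_derivative[OF bl_P2])
  show "dx P2 z = 2 * sin (t / 2)" using dx_at[OF d] by (simp add: P2_def c2_def Im_exp)
  show "dy P2 z = 2 * cos (t / 2)" using dy_at[OF d] by (simp add: P2_def c2_def Re_exp)
  show "P2 differentiable (at z)" using d by (auto simp: differentiable_def)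
qed

lemma sP2: "smooth P2"
proof -
  have "smooth (\<lambda>z. P2 z)" by (rule smooth_lin[OF bl_P2 smooth_id])
  then show ?thesis by simp
qed

definition Phi where "Phi z = (NU z, P2 z)"

lemma Phi_eq: "(\<lambda>z. (nu_plus F z, 2 * Im (z * exp (\<i> * complex_of_real t / 2)))) = Phi"
  by (simp add: fun_eq_iff Phi_def nu_eq P2_def c2_def)

lemma dNUd [simp]: "NU differentiable (at z)" "GX differentiable (at z)" "GY differentiable (at z)"
proof -
  show "NU differentiable (at z)" by (rule smooth_diff[OF sNU])
  have "dx NU = GX" "dy NU = GY" by (simp_all add: fun_eq_iff dNU dyNU)
  then show "GX differentiable (at z)" "GY differentiable (at z)"
    using smooth_diff[OF smooth_dx[OF sNU]] smooth_diff[OF smooth_dy[OF sNU]] by auto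
qed

lemma dPhi: "dx Phi z = (GX z, 2 * sin (t / 2))" "dy Phi z = (GY z, 2 * cos (t / 2))"
proof -
  have e: "Phi = (\<lambda>z. (NU z, P2 z))" by (simp add: fun_eq_iff Phi_def)
  show "dx Phi z = (GX z, 2 * sin (t / 2))" unfolding e by (simp add: dx_pair dP2 dNU)
  show "dy Phi z = (GY z, 2 * cos (t / 2))" unfolding e by (simp add: dy_pair dP2 dyNU)
qed

lemma lapPhi: "lap Phi z = (dx GX z + dy GY z, 0)"
proof -
  have "dx Phi = (\<lambda>z. (GX z, 2 * sin (t / 2)))" "dy Phi = (\<lambda>z. (GY z, 2 * cos (t / 2)))"
    by (simp_all add: fun_eq_iff dPhi)
  then show ?thesis unfolding lap_def by (simp add: dx_pair dy_pair)
qed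

lemma cosh2: "4 * (cosh (v z))^2 = exp (2 * v z) + 2 + exp (-2 * v z)"
proof -
  have "4 * (cosh (v z))^2 = (exp (v z) + exp (- v z))^2" by (simp add: cosh_def power2_eq_square field_simps)
  also have "\<dots> = exp (v z) * exp (v z) + 2 * (exp (v z) * exp (- v z)) + exp (- v z) * exp (- v z)"
    by (simp add: power2_eq_square algebra_simps)
  also have "\<dots> = exp (2 * v z) + 2 + exp (-2 * v z)"
    by (simp add: exp_add[symmetric])
  finally show ?thesis .
qed

lemma trig: "cos t = 1 - 2 * (sin (t/2))^2" "cos t = 2 * (cos (t/2))^2 - 1" "sin t = 2 * sin (t/2) * cos (t/2)"
  using cos_double_sin[of "t/2"] cos_double_cos[of "t/2"] sin_double[of "t/2"] by simp_all

lemma Phi_iso: "isometric_immersion Phi (\<lambda>z. 4 * (cosh (v z))\<^sup>2)"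
  unfolding isometric_immersion_def
proof (intro conjI allI)
  show "smooth Phi"
  proof -
    have "smooth (\<lambda>z. (NU z, P2 z))" by (rule smooth_pair[OF sNU sP2])
    then show ?thesis by (simp add: Phi_def[abs_def])
  qed
  fix z
  show "0 < 4 * (cosh (v z))\<^sup>2" by simp
  show "dx Phi z \<bullet> dx Phi z = 4 * (cosh (v z))\<^sup>2"
    unfolding dPhi cosh2 using GXX[of z] trig by (simp add: power2_eq_square)
  show "dy Phi z \<bullet> dy Phi z = 4 * (cosh (v z))\<^sup>2"
    unfolding dPhi cosh2 using GYY[of z] trig by (simp add: power2_eq_square)
  show "dx Phi z \<bullet> dy Phi z = 0"
    unfolding dPhi using GXY[of z] trig by (simp add: power2_eq_square)
qed

lemma Phi_min: "isometric_minimal_immersion (S2plus \<times> UNIV) TanS2R Phi (\<lambda>z. 4 * (cosh (v z))\<^sup>2)"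
  unfolding isometric_minimal_immersion_def
proof (intro conjI allI impI)
  show "isometric_immersion Phi (\<lambda>z. 4 * (cosh (v z))\<^sup>2)" by (rule Phi_iso)
  fix z show "Phi z \<in> S2plus \<times> UNIV" using NU_S2 by (simp add: Phi_def)
next
  fix z u
  assume u: "u \<in> TanS2R (Phi z) \<and> u \<bullet> dx Phi z = 0 \<and> u \<bullet> dy Phi z = 0"
  then have "fst u \<bullet> NU z = 0" by (simp add: TanS2R_def Phi_def)
  then show "lap Phi z \<bullet> u = 0"
    unfolding lapPhi lapNU by (cases u) (simp add: inner_commute)
qed

lemma Phi_hopf: "hopf_S2R Phi z = exp (\<i> * complex_of_real t)"
proof -
  have f: "(\<lambda>w. fst (Phi w)) = NU" by (simp add: fun_eq_iff Phi_def)
  have "dz NU z = ((1/2) *\<^sub>R GX z, (-1/2) *\<^sub>R GY z)" by (simp add: dz_def dNU dyNU)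
  then have h: "hopf_S2R Phi z = Complex ((GX z \<bullet> GX z - GY z \<bullet> GY z) / 4) (- (GX z \<bullet> GY z) / 2)"
    unfolding hopf_S2R_def f cbil_def by (simp add: inner_commute)
  show ?thesis unfolding h GXX GYY GXY by (simp add: complex_eq_iff Re_exp Im_exp)
qed

end

theorem corollary5p5:
  fixes v :: "complex \<Rightarrow> real" and \<phi> :: "real \<Rightarrow> complex \<Rightarrow> real^4"
  assumes v_smooth: "smooth v"
    and v_eq: "\<forall>z. lap v z / 4 + sinh (2 * v z) / 2 = 0"
    and phi_min: "\<forall>t. isometric_minimal_immersion S3 TanS3 (\<phi> t) (\<lambda>z. exp (2 * v z))"
    and phi_hopf: "\<forall>t z. hopf_S3 (\<phi> t) z = \<i> / 2 * exp (\<i> * complex_of_real t)"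
  shows "\<forall>t. isometric_minimal_immersion (S2plus \<times> UNIV) TanS2R
              (\<lambda>z. (nu_plus (\<phi> t) z, 2 * Im (z * exp (\<i> * complex_of_real t / 2))))
              (\<lambda>z. 4 * (cosh (v z))\<^sup>2)
           \<and> (\<forall>z. hopf_S2R (\<lambda>z. (nu_plus (\<phi> t) z, 2 * Im (z * exp (\<i> * complex_of_real t / 2)))) z
                  = exp (\<i> * complex_of_real t))"
proof
  fix t
  interpret surf "\<phi> t" v t
    using v_smooth phi_min phi_hopf by (unfold_locales) auto
  show "isometric_minimal_immersion (S2plus \<times> UNIV) TanS2R
              (\<lambda>z. (nu_plus (\<phi> t) z, 2 * Im (z * exp (\<i> * complex_of_real t / 2))))
              (\<lambda>z. 4 * (cosh (v z))\<^sup>2)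
           \<and> (\<forall>z. hopf_S2R (\<lambda>z. (nu_plus (\<phi> t) z, 2 * Im (z * exp (\<i> * complex_of_real t / 2)))) z
                  = exp (\<i> * complex_of_real t))"
    unfolding Phi_eq using Phi_min Phi_hopf by blast
qed

end
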